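(* Let $\mathcal V\subseteq B(H)$ be an operator system and let $p\in\mathcal V$ be a projection in $B(H)$. Then $(\mathcal V/J_p,\{\widetilde C(p_n)\}_n,p+J_p)$ is an operator system.
   Context: $p_n=I_n\otimes p$; $C(p_n)=\{x\in M_n(\mathcal V): x=x^*,\ p_nxp_n\ge 0\text{ in } B(H^n)\}$; $J_p=\operatorname{span}(C(p)\cap-C(p))$; $\widetilde C(p_n)=\{(x_{ij}+J_p)\in M_n(\mathcal V/J_p):(x_{ij})\in C(p_n)\}$. An operator system is a $*$-vector space with a proper matrix ordering (cones $D_n\subseteq M_n(\cdot)_h$, $\alpha^*D_n\alpha\subseteq D_m$, $D_n\cap-D_n=\{0\}$) and an Archimedean matrix order unit. *)

theory Defs
  imports Complex_Main
begin

class complex_hilbert = ab_group_add +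
  fixes scaleC :: "complex \<Rightarrow> 'a \<Rightarrow> 'a"
    and cinner :: "'a \<Rightarrow> 'a \<Rightarrow> complex"
  assumes scaleC_add_right: "scaleC a (x + y) = scaleC a x + scaleC a y"
    and scaleC_add_left: "scaleC (a + b) x = scaleC a x + scaleC b x"
    and scaleC_scaleC: "scaleC a (scaleC b x) = scaleC (a * b) x"
    and scaleC_one: "scaleC 1 x = x"
    and cinner_add_left: "cinner (x + y) z = cinner x z + cinner y z"
    and cinner_scaleC_left: "cinner (scaleC a x) y = a * cinner x y"
    and cinner_commute: "cinner y x = cnj (cinner x y)"
    and cinner_ge_zero: "Im (cinner x x) = 0 \<and> Re (cinner x x) \<ge> 0"
    and cinner_eq_zero: "cinner x x = 0 \<longleftrightarrow> x = 0"
    and complete: "(\<forall>e::real>0. \<exists>N::nat. \<forall>m\<ge>N. \<forall>n\<ge>N.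
                       sqrt (Re (cinner (X m - X n) (X m - X n))) < e)
                   \<Longrightarrow> \<exists>L. \<forall>e::real>0. \<exists>N::nat. \<forall>n\<ge>N.
                       sqrt (Re (cinner (X n - L) (X n - L))) < e"
    \<comment> \<open>inner product linear in the first, conjugate-linear in the second argument\<close>

definition hnorm :: "'h::complex_hilbert \<Rightarrow> real" where
  "hnorm x = sqrt (Re (cinner x x))"

definition clinear_op :: "('h::complex_hilbert \<Rightarrow> 'h) \<Rightarrow> bool" where
  "clinear_op T \<longleftrightarrow> (\<forall>x y. T (x + y) = T x + T y) \<and> (\<forall>a x. T (scaleC a x) = scaleC a (T x))"

definition BH :: "('h::complex_hilbert \<Rightarrow> 'h) set" where
  "BH = {T. clinear_op T \<and> (\<exists>K. \<forall>x. hnorm (T x) \<le> K * hnorm x)}"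

definition adj :: "('h::complex_hilbert \<Rightarrow> 'h) \<Rightarrow> ('h \<Rightarrow> 'h)" where
  "adj T = (SOME S. \<forall>x y. cinner (T x) y = cinner x (S y))"

definition op_add :: "('h::complex_hilbert \<Rightarrow> 'h) \<Rightarrow> ('h \<Rightarrow> 'h) \<Rightarrow> ('h \<Rightarrow> 'h)" where
  "op_add S T = (\<lambda>x. S x + T x)"

definition op_scale :: "complex \<Rightarrow> ('h::complex_hilbert \<Rightarrow> 'h) \<Rightarrow> ('h \<Rightarrow> 'h)" where
  "op_scale c T = (\<lambda>x. scaleC c (T x))"

definition op_zero :: "'h::complex_hilbert \<Rightarrow> 'h" where
  "op_zero = (\<lambda>x. 0)"

definition concrete_opsys :: "('h::complex_hilbert \<Rightarrow> 'h) set \<Rightarrow> bool" where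
  "concrete_opsys V \<longleftrightarrow> V \<subseteq> BH \<and> op_zero \<in> V \<and> id \<in> V
     \<and> (\<forall>S\<in>V. \<forall>T\<in>V. op_add S T \<in> V)
     \<and> (\<forall>c. \<forall>T\<in>V. op_scale c T \<in> V)
     \<and> (\<forall>T\<in>V. adj T \<in> V)"

definition is_projection :: "('h::complex_hilbert \<Rightarrow> 'h) \<Rightarrow> bool" where
  "is_projection p \<longleftrightarrow> p \<in> BH \<and> adj p = p \<and> p \<circ> p = p"

section \<open>Matrices over a carrier (n x n matrices as functions nat => nat => 'v, entries outside
  the range {0..<n} equal to the zero vector)\<close>

definition matc :: "'v set \<Rightarrow> 'v \<Rightarrow> nat \<Rightarrow> (nat \<Rightarrow> nat \<Rightarrow> 'v) set" where
  "matc W z n = {X. (\<forall>i<n. \<forall>j<n. X i j \<in> W) \<and> (\<forall>i j. \<not> (i < n \<and> j < n) \<longrightarrow> X i j = z)}"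

definition herm :: "('v \<Rightarrow> 'v) \<Rightarrow> nat \<Rightarrow> (nat \<Rightarrow> nat \<Rightarrow> 'v) \<Rightarrow> bool" where
  "herm st n X \<longleftrightarrow> (\<forall>i<n. \<forall>j<n. st (X i j) = X j i)"

fun vsum :: "('v \<Rightarrow> 'v \<Rightarrow> 'v) \<Rightarrow> 'v \<Rightarrow> (nat \<Rightarrow> 'v) \<Rightarrow> nat \<Rightarrow> 'v" where
  "vsum add z f 0 = z"
| "vsum add z f (Suc n) = add (vsum add z f n) (f n)"

text \<open>alpha^* X alpha for alpha an n x m complex matrix and X an n x n matrix\<close>
definition conj_mat :: "('v \<Rightarrow> 'v \<Rightarrow> 'v) \<Rightarrow> (complex \<Rightarrow> 'v \<Rightarrow> 'v) \<Rightarrow> 'v \<Rightarrow> nat \<Rightarrow> nat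
     \<Rightarrow> (nat \<Rightarrow> nat \<Rightarrow> complex) \<Rightarrow> (nat \<Rightarrow> nat \<Rightarrow> 'v) \<Rightarrow> (nat \<Rightarrow> nat \<Rightarrow> 'v)" where
  "conj_mat add sm z n m \<alpha> X = (\<lambda>k l. if k < m \<and> l < m then
      vsum add z (\<lambda>i. vsum add z (\<lambda>j. sm (cnj (\<alpha> i k) * \<alpha> j l) (X i j)) n) n else z)"

definition unit_mat :: "'v \<Rightarrow> 'v \<Rightarrow> nat \<Rightarrow> (nat \<Rightarrow> nat \<Rightarrow> 'v)" where
  "unit_mat z e n = (\<lambda>i j. if i < n \<and> i = j then e else z)"

definition cvector_space :: "'v set \<Rightarrow> ('v \<Rightarrow> 'v \<Rightarrow> 'v) \<Rightarrow> (complex \<Rightarrow> 'v \<Rightarrow> 'v) \<Rightarrow> 'v \<Rightarrow> bool" where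
  "cvector_space W add sm z \<longleftrightarrow> z \<in> W
     \<and> (\<forall>x\<in>W. \<forall>y\<in>W. add x y \<in> W) \<and> (\<forall>c. \<forall>x\<in>W. sm c x \<in> W)
     \<and> (\<forall>x\<in>W. \<forall>y\<in>W. \<forall>u\<in>W. add (add x y) u = add x (add y u))
     \<and> (\<forall>x\<in>W. \<forall>y\<in>W. add x y = add y x)
     \<and> (\<forall>x\<in>W. add z x = x)
     \<and> (\<forall>x\<in>W. \<exists>y\<in>W. add x y = z)
     \<and> (\<forall>a. \<forall>x\<in>W. \<forall>y\<in>W. sm a (add x y) = add (sm a x) (sm a y))
     \<and> (\<forall>a b. \<forall>x\<in>W. sm (a + b) x = add (sm a x) (sm b x))
     \<and> (\<forall>a b. \<forall>x\<in>W. sm a (sm b x) = sm (a * b) x)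
     \<and> (\<forall>x\<in>W. sm 1 x = x)"

definition star_vector_space :: "'v set \<Rightarrow> ('v \<Rightarrow> 'v \<Rightarrow> 'v) \<Rightarrow> (complex \<Rightarrow> 'v \<Rightarrow> 'v) \<Rightarrow> 'v
     \<Rightarrow> ('v \<Rightarrow> 'v) \<Rightarrow> bool" where
  "star_vector_space W add sm z st \<longleftrightarrow> cvector_space W add sm z
     \<and> (\<forall>x\<in>W. st x \<in> W) \<and> (\<forall>x\<in>W. st (st x) = x)
     \<and> (\<forall>x\<in>W. \<forall>y\<in>W. st (add x y) = add (st x) (st y))
     \<and> (\<forall>c. \<forall>x\<in>W. st (sm c x) = sm (cnj c) (st x))"

definition proper_matrix_ordering :: "'v set \<Rightarrow> ('v \<Rightarrow> 'v \<Rightarrow> 'v) \<Rightarrow> (complex \<Rightarrow> 'v \<Rightarrow> 'v) \<Rightarrow> 'v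
     \<Rightarrow> ('v \<Rightarrow> 'v) \<Rightarrow> (nat \<Rightarrow> (nat \<Rightarrow> nat \<Rightarrow> 'v) set) \<Rightarrow> bool" where
  "proper_matrix_ordering W add sm z st D \<longleftrightarrow>
     (\<forall>n\<ge>1. D n \<subseteq> {X \<in> matc W z n. herm st n X})
     \<and> (\<forall>n\<ge>1. \<forall>X\<in>D n. \<forall>Y\<in>D n. (\<lambda>i j. add (X i j) (Y i j)) \<in> D n)
     \<and> (\<forall>n\<ge>1. \<forall>X\<in>D n. \<forall>r::real. r \<ge> 0 \<longrightarrow> (\<lambda>i j. sm (complex_of_real r) (X i j)) \<in> D n)
     \<and> (\<forall>n\<ge>1. \<forall>m\<ge>1. \<forall>\<alpha>. \<forall>X\<in>D n. conj_mat add sm z n m \<alpha> X \<in> D m)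
     \<and> (\<forall>n\<ge>1. \<forall>X\<in>D n. (\<lambda>i j. sm (-1) (X i j)) \<in> D n \<longrightarrow> X = (\<lambda>i j. z))"

definition archimedean_matrix_order_unit :: "'v set \<Rightarrow> ('v \<Rightarrow> 'v \<Rightarrow> 'v) \<Rightarrow> (complex \<Rightarrow> 'v \<Rightarrow> 'v) \<Rightarrow> 'v
     \<Rightarrow> ('v \<Rightarrow> 'v) \<Rightarrow> (nat \<Rightarrow> (nat \<Rightarrow> nat \<Rightarrow> 'v) set) \<Rightarrow> 'v \<Rightarrow> bool" where
  "archimedean_matrix_order_unit W add sm z st D e \<longleftrightarrow> e \<in> W \<and> st e = e
     \<and> (\<forall>n\<ge>1. \<forall>X\<in>matc W z n. herm st n X \<longrightarrow>
           (\<exists>r::real. r > 0 \<and>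
              (\<lambda>i j. add (sm (complex_of_real r) (unit_mat z e n i j)) (X i j)) \<in> D n))
     \<and> (\<forall>n\<ge>1. \<forall>X\<in>matc W z n. herm st n X \<longrightarrow>
           (\<forall>r::real. r > 0 \<longrightarrow>
              (\<lambda>i j. add (sm (complex_of_real r) (unit_mat z e n i j)) (X i j)) \<in> D n)
           \<longrightarrow> X \<in> D n)"

definition operator_system :: "'v set \<Rightarrow> ('v \<Rightarrow> 'v \<Rightarrow> 'v) \<Rightarrow> (complex \<Rightarrow> 'v \<Rightarrow> 'v) \<Rightarrow> 'v
     \<Rightarrow> ('v \<Rightarrow> 'v) \<Rightarrow> (nat \<Rightarrow> (nat \<Rightarrow> nat \<Rightarrow> 'v) set) \<Rightarrow> 'v \<Rightarrow> bool" where
  "operator_system W add sm z st D e \<longleftrightarrow> star_vector_space W add sm z st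
     \<and> proper_matrix_ordering W add sm z st D \<and> archimedean_matrix_order_unit W add sm z st D e"

text \<open>p_n x p_n \<ge> 0 in B(H^n), written out on vectors xi = (xi_0,...,xi_{n-1}) of H^n.\<close>
definition Cp :: "('h::complex_hilbert \<Rightarrow> 'h) set \<Rightarrow> ('h \<Rightarrow> 'h) \<Rightarrow> nat
     \<Rightarrow> (nat \<Rightarrow> nat \<Rightarrow> ('h \<Rightarrow> 'h)) set" where
  "Cp V p n = {X \<in> matc V op_zero n. herm adj n X \<and>
     (\<forall>\<xi>::nat \<Rightarrow> 'h. let q = (\<Sum>i<n. \<Sum>j<n. cinner ((p \<circ> X i j \<circ> p) (\<xi> j)) (\<xi> i))
                      in Im q = 0 \<and> Re q \<ge> 0)}"

definition C1 :: "('h::complex_hilbert \<Rightarrow> 'h) set \<Rightarrow> ('h \<Rightarrow> 'h) \<Rightarrow> ('h \<Rightarrow> 'h) set" where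
  "C1 V p = {x. (\<lambda>i j. if i = 0 \<and> j = 0 then x else op_zero) \<in> Cp V p 1}"

definition cspan :: "('h::complex_hilbert \<Rightarrow> 'h) set \<Rightarrow> ('h \<Rightarrow> 'h) set" where
  "cspan S = {T. \<exists>k (c::nat \<Rightarrow> complex) a. (\<forall>i<k. a i \<in> S) \<and>
                  T = (\<lambda>x. \<Sum>i<k. scaleC (c i) (a i x))}"

definition Jp :: "('h::complex_hilbert \<Rightarrow> 'h) set \<Rightarrow> ('h \<Rightarrow> 'h) \<Rightarrow> ('h \<Rightarrow> 'h) set" where
  "Jp V p = cspan (C1 V p \<inter> op_scale (-1) ` C1 V p)"

definition coset :: "('h::complex_hilbert \<Rightarrow> 'h) set \<Rightarrow> ('h \<Rightarrow> 'h) \<Rightarrow> ('h \<Rightarrow> 'h) set" where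
  "coset J x = {op_add x j | j. j \<in> J}"

definition quot :: "('h::complex_hilbert \<Rightarrow> 'h) set \<Rightarrow> ('h \<Rightarrow> 'h) set \<Rightarrow> ('h \<Rightarrow> 'h) set set" where
  "quot V J = coset J ` V"

definition qrep :: "('h::complex_hilbert \<Rightarrow> 'h) set \<Rightarrow> ('h \<Rightarrow> 'h)" where
  "qrep A = (SOME a. a \<in> A)"

definition qadd :: "('h::complex_hilbert \<Rightarrow> 'h) set \<Rightarrow> ('h \<Rightarrow> 'h) set \<Rightarrow> ('h \<Rightarrow> 'h) set \<Rightarrow> ('h \<Rightarrow> 'h) set" where
  "qadd J A B = coset J (op_add (qrep A) (qrep B))"

definition qscale :: "('h::complex_hilbert \<Rightarrow> 'h) set \<Rightarrow> complex \<Rightarrow> ('h \<Rightarrow> 'h) set \<Rightarrow> ('h \<Rightarrow> 'h) set" where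
  "qscale J c A = coset J (op_scale c (qrep A))"

definition qstar :: "('h::complex_hilbert \<Rightarrow> 'h) set \<Rightarrow> ('h \<Rightarrow> 'h) set \<Rightarrow> ('h \<Rightarrow> 'h) set" where
  "qstar J A = coset J (adj (qrep A))"

definition Ctilde :: "('h::complex_hilbert \<Rightarrow> 'h) set \<Rightarrow> ('h \<Rightarrow> 'h) \<Rightarrow> nat
     \<Rightarrow> (nat \<Rightarrow> nat \<Rightarrow> ('h \<Rightarrow> 'h) set) set" where
  "Ctilde V p n = (\<lambda>X. \<lambda>i j. coset (Jp V p) (X i j)) ` Cp V p n"

end

theory Submission
  imports Defs
begin

lemma hmod: "module (scaleC :: complex \<Rightarrow> 'a::complex_hilbert \<Rightarrow> 'a)"
  by unfold_locales (auto simp: scaleC_add_right scaleC_add_left scaleC_scaleC scaleC_one)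

lemmas scaleC_zero_left[simp] = module.scale_zero_left[OF hmod]
lemmas scaleC_zero_right[simp] = module.scale_zero_right[OF hmod]
lemmas scaleC_minus_left[simp] = module.scale_minus_left[OF hmod]
lemmas scaleC_minus_right[simp] = module.scale_minus_right[OF hmod]
lemmas scaleC_diff_left = module.scale_left_diff_distrib[OF hmod]
lemmas scaleC_diff_right = module.scale_right_diff_distrib[OF hmod]
lemmas scaleC_sum_left = module.scale_sum_left[OF hmod]
lemmas scaleC_sum_right = module.scale_sum_right[OF hmod]
declare scaleC_scaleC[simp] scaleC_one[simp]

lemma cinner_add_right: "cinner x (y + z) = cinner x y + cinner x (z::'a::complex_hilbert)"
proof -
  have "cinner x (y + z) = cnj (cinner (y + z) x)" by (rule cinner_commute)
  also have "\<dots> = cnj (cinner y x) + cnj (cinner z x)" by (simp add: cinner_add_left)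
  also have "\<dots> = cinner x y + cinner x z" by (simp add: cinner_commute[of x y] cinner_commute[of x z])
  finally show ?thesis .
qed
lemma cinner_scaleC_right: "cinner x (scaleC a y) = cnj a * cinner x (y::'a::complex_hilbert)"
proof -
  have "cinner x (scaleC a y) = cnj (cinner (scaleC a y) x)" by (rule cinner_commute)
  also have "\<dots> = cnj a * cnj (cinner y x)" by (simp add: cinner_scaleC_left)
  also have "\<dots> = cnj a * cinner x y" by (simp add: cinner_commute[of x y])
  finally show ?thesis .
qed
lemma cinner_zero_left[simp]: "cinner 0 (x::'a::complex_hilbert) = 0"
proof -
  have "cinner (0+0) x = cinner 0 x + cinner 0 x" by (rule cinner_add_left)
  then show ?thesis by simp
qed
lemma cinner_zero_right[simp]: "cinner x (0::'a::complex_hilbert) = 0"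
proof -
  have "cinner x 0 = cnj (cinner 0 x)" by (rule cinner_commute)
  then show ?thesis by simp
qed
lemma cinner_minus_left[simp]: "cinner (-x) (y::'a::complex_hilbert) = - cinner x y"
proof -
  have "cinner (-x + x) y = cinner (-x) y + cinner x y" by (rule cinner_add_left)
  then show ?thesis by (simp add: eq_neg_iff_add_eq_0)
qed
lemma cinner_minus_right[simp]: "cinner x (-y::'a::complex_hilbert) = - cinner x y"
proof -
  have "cinner x (-y) = cnj (cinner (-y) x)" by (rule cinner_commute)
  also have "\<dots> = - cnj (cinner y x)" by simp
  also have "\<dots> = - cinner x y" by (simp add: cinner_commute[of x y])
  finally show ?thesis .
qed
lemma cinner_diff_left: "cinner (x - y) (z::'a::complex_hilbert) = cinner x z - cinner y z"
  by (simp only: diff_conv_add_uminus cinner_add_left cinner_minus_left)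
lemma cinner_diff_right: "cinner x (y - z::'a::complex_hilbert) = cinner x y - cinner x z"
  by (simp only: diff_conv_add_uminus cinner_add_right cinner_minus_right)
lemma cinner_sum_left: "cinner (\<Sum>i\<in>A. f i) (z::'a::complex_hilbert) = (\<Sum>i\<in>A. cinner (f i) z)"
  by (induct A rule: infinite_finite_induct) (auto simp: cinner_add_left)
lemma cinner_sum_right: "cinner z (\<Sum>i\<in>A. f i) = (\<Sum>i\<in>A. cinner (z::'a::complex_hilbert) (f i))"
  by (induct A rule: infinite_finite_induct) (auto simp: cinner_add_right)
declare cinner_scaleC_left[simp] cinner_scaleC_right[simp]

definition NN :: "'a::complex_hilbert \<Rightarrow> real" where "NN x = Re (cinner x x)"

lemma NN_ge0: "NN x \<ge> 0" using cinner_ge_zero[of x] by (simp add: NN_def)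
lemma cinner_self: "cinner x x = complex_of_real (NN x)"
  using cinner_ge_zero[of x] by (simp add: NN_def complex_eq_iff)
lemma NN_eq0: "NN x = 0 \<longleftrightarrow> x = 0"
proof -
  have "NN x = 0 \<longleftrightarrow> cinner x x = 0" by (simp add: cinner_self)
  then show ?thesis using cinner_eq_zero by simp
qed
lemma hnorm_NN: "hnorm x = sqrt (NN x)" by (simp add: hnorm_def NN_def)

lemma cinner_swap: "cinner y x = cnj (cinner x y)" by (rule cinner_commute)

lemma CS: "(cmod (cinner x y))^2 \<le> NN x * NN (y::'a::complex_hilbert)"
proof (cases "y = 0")
  case True then show ?thesis by (simp add: NN_def)
next
  case False
  define D where "D = NN y"
  have D: "D > 0" using False NN_eq0 NN_ge0 unfolding D_def by (metis less_eq_real_def)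
  define c where "c = cinner x y"
  define t where "t = c / complex_of_real D"
  have yx: "cinner y x = cnj c" by (simp add: c_def cinner_swap[of y x])
  have yy: "cinner y y = complex_of_real D" by (simp add: D_def cinner_self)
  have e1: "cinner (x - scaleC t y) (x - scaleC t y)
     = cinner x x - cnj t * c - t * cnj c + t * cnj t * complex_of_real D"
    unfolding cinner_diff_left cinner_diff_right cinner_scaleC_left cinner_scaleC_right
    by (simp add: yx yy c_def[symmetric] algebra_simps)
  have cc: "c * cnj c = complex_of_real ((cmod c)^2)" by (rule complex_norm_square[symmetric])
  have ct: "cnj t = cnj c / complex_of_real D" by (simp add: t_def)
  have e2a: "cnj t * c = complex_of_real ((cmod c)^2 / D)"
    unfolding ct using cc by (simp add: mult.commute)
  have e2b: "t * cnj c = complex_of_real ((cmod c)^2 / D)"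
    unfolding t_def using cc by simp
  have e2c: "t * cnj t * complex_of_real D = complex_of_real ((cmod c)^2 / D)"
    unfolding t_def ct using cc D by (simp add: power2_eq_square)
  have e2: "Re (cnj t * c) = (cmod c)^2 / D" "Re (t * cnj c) = (cmod c)^2 / D"
     "Re (t * cnj t * complex_of_real D) = (cmod c)^2 / D"
    using e2a e2b e2c by simp_all
  have "NN (x - scaleC t y) = NN x - (cmod c)^2 / D"
    unfolding NN_def e1 using e2 by simp
  moreover have "0 \<le> NN (x - scaleC t y)" by (rule NN_ge0)
  ultimately have "(cmod c)^2 / D \<le> NN x" by linarith
  then have "(cmod c)^2 \<le> NN x * D" using D by (simp add: pos_divide_le_eq)
  then show ?thesis unfolding c_def D_def .
qed

lemma CS': "cmod (cinner x y) \<le> hnorm x * hnorm (y::'a::complex_hilbert)"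
  using CS[of x y] by (simp add: hnorm_NN real_le_rsqrt real_sqrt_mult[symmetric] NN_ge0)


lemma hnorm_ge0: "hnorm x \<ge> 0" by (simp add: hnorm_NN NN_ge0)
lemma abs_hnorm[simp]: "\<bar>hnorm x\<bar> = hnorm x" using hnorm_ge0[of x] by simp

lemma NN_add: "NN (x + y) = NN x + NN y + 2 * Re (cinner x (y::'a::complex_hilbert))"
proof -
  have "cinner (x + y) (x + y) = cinner x x + cinner y y + (cinner x y + cinner y x)"
    by (simp add: cinner_add_left cinner_add_right algebra_simps)
  moreover have "Re (cinner y x) = Re (cinner x y)" by (simp add: cinner_commute[of y x])
  ultimately show ?thesis by (simp add: NN_def)
qed

lemma NN_diff: "NN (x - y) = NN x + NN y - 2 * Re (cinner x (y::'a::complex_hilbert))"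
proof -
  have "cinner (x - y) (x - y) = cinner x x + cinner y y - (cinner x y + cinner y x)"
    by (simp add: cinner_diff_left cinner_diff_right algebra_simps)
  moreover have "Re (cinner y x) = Re (cinner x y)" by (simp add: cinner_commute[of y x])
  ultimately show ?thesis by (simp add: NN_def)
qed

lemma NN_scale: "NN (scaleC a x) = (cmod a)^2 * NN (x::'a::complex_hilbert)"
proof -
  have "cinner (scaleC a x) (scaleC a x) = (a * cnj a) * cinner x x" by (simp add: algebra_simps)
  also have "\<dots> = complex_of_real ((cmod a)^2 * NN x)"
    by (simp add: complex_norm_square[symmetric] cinner_self)
  finally show ?thesis by (simp add: NN_def)
qed

lemma NN_minus: "NN (- x) = NN (x::'a::complex_hilbert)"
  by (simp add: NN_def)

lemma hnorm_triangle: "hnorm (x + y) \<le> hnorm x + hnorm (y::'a::complex_hilbert)"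
proof -
  have "Re (cinner x y) \<le> cmod (cinner x y)" by (rule complex_Re_le_cmod)
  also have "\<dots> \<le> hnorm x * hnorm y" by (rule CS')
  finally have "NN (x + y) \<le> (hnorm x + hnorm y)^2"
    unfolding NN_add power2_eq_square using NN_ge0[of x] NN_ge0[of y]
    by (simp add: hnorm_NN algebra_simps)
  then have "sqrt (NN (x + y)) \<le> sqrt ((hnorm x + hnorm y)^2)" by (rule real_sqrt_le_mono)
  then show ?thesis using hnorm_ge0[of x] hnorm_ge0[of y] by (simp add: hnorm_NN)
qed

lemma hnorm_diff_commute: "hnorm (x - y) = hnorm (y - (x::'a::complex_hilbert))"
proof -
  have "NN (x - y) = NN (- (x - y))" by (rule NN_minus[symmetric])
  also have "- (x - y) = y - x" by simp
  finally show ?thesis by (simp add: hnorm_NN)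
qed

lemma inner_ext: assumes "\<And>x. cinner x a = cinner x (b::'a::complex_hilbert)" shows "a = b"
proof -
  have "cinner (a - b) (a - b) = 0" by (simp add: cinner_diff_right assms)
  then have "a - b = 0" using cinner_eq_zero by blast
  then show ?thesis by simp
qed

lemma riesz:
  fixes f :: "'a::complex_hilbert \<Rightarrow> complex"
  assumes add: "\<And>x y. f (x + y) = f x + f y" and sc: "\<And>a x. f (scaleC a x) = a * f x"
    and bd: "\<And>x. cmod (f x) \<le> K * hnorm x"
  shows "\<exists>z. \<forall>x. f x = cinner x z"
proof -
  have f0: "f 0 = 0" using add[of 0 0] by simp
  have fdiff: "f (x - y) = f x - f y" for x y
  proof -
    have "f ((x - y) + y) = f (x - y) + f y" by (rule add)
    then show ?thesis by (simp add: eq_diff_eq)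
  qed
  show ?thesis
  proof (cases "\<forall>x. f x = 0")
    case True then show ?thesis by (intro exI[of _ 0]) simp
  next
    case False
    then obtain x0 where x0: "f x0 \<noteq> 0" by blast
    define A where "A = {x. f x = 1}"
    have a0: "scaleC (1 / f x0) x0 \<in> A" using x0 by (simp add: A_def sc)
    define d where "d = Inf (NN ` A)"
    have bdd: "bdd_below (NN ` A)" using NN_ge0 by (meson bdd_belowI2)
    have lowr: "d \<le> NN x" if "x \<in> A" for x
      unfolding d_def using bdd that by (simp add: cInf_lower)
    have ex: "\<exists>x. x \<in> A \<and> NN x < d + 1 / (real n + 1)" for n
    proof -
      have ne: "NN ` A \<noteq> {}" using a0 by blast
      have lt: "Inf (NN ` A) < d + 1 / (real n + 1)" unfolding d_def[symmetric]
        by (simp add: add_pos_pos)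
      from cInf_lessD[OF ne lt] obtain y where "y \<in> NN ` A" "y < d + 1 / (real n + 1)" by blast
      then show ?thesis by auto
    qed
    then have "\<forall>n. \<exists>x. x \<in> A \<and> NN x < d + 1 / (real n + 1)" by blast
    then obtain xs where xs0: "\<forall>n. xs n \<in> A \<and> NN (xs n) < d + 1 / (real n + 1)"
      by (rule choice[THEN exE])
    then have xs: "\<And>n. xs n \<in> A" "\<And>n. NN (xs n) < d + 1 / (real n + 1)" by auto
    have mid: "scaleC (1/2) (x + y) \<in> A" if "x \<in> A" "y \<in> A" for x y
      using that by (simp add: A_def sc add)
    have par: "NN (x - y) \<le> 2 * NN x + 2 * NN y - 4 * d" if "x \<in> A" "y \<in> A" for x y
    proof -
      have "NN (x + y) = NN (scaleC 2 (scaleC (1/2) (x + y)))" by simp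
      also have "\<dots> = 4 * NN (scaleC (1/2) (x + y))" by (simp add: NN_scale power2_eq_square)
      finally have "NN (x + y) = 4 * NN (scaleC (1/2) (x + y))" .
      then have "NN (x + y) \<ge> 4 * d" using lowr[OF mid[OF that]] by simp
      then show ?thesis using NN_add[of x y] NN_diff[of x y] by linarith
    qed
    have cauchy: "\<forall>e>0. \<exists>N. \<forall>m\<ge>N. \<forall>n\<ge>N. sqrt (Re (cinner (xs m - xs n) (xs m - xs n))) < e"
    proof (intro allI impI)
      fix e :: real assume e: "e > 0"
      obtain N :: nat where N: "4 / e^2 < real N" using reals_Archimedean2 by blast
      have N': "4 / (real N + 1) < e^2"
      proof -
        have "4 < e^2 * real N" using N e by (simp add: divide_less_eq mult.commute)
        then have "4 < e^2 * (real N + 1)" using e proof -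
          have "0 \<le> e^2" by simp
          moreover have "e^2 * (real N + 1) = e^2 * real N + e^2" by (simp add: distrib_left)
          ultimately show ?thesis using \<open>4 < e^2 * real N\<close> by linarith
        qed
        then show ?thesis by (simp add: divide_less_eq)
      qed
      show "\<exists>N. \<forall>m\<ge>N. \<forall>n\<ge>N. sqrt (Re (cinner (xs m - xs n) (xs m - xs n))) < e"
      proof (intro exI allI impI)
        fix m n assume mn: "N \<le> m" "N \<le> n"
        have i1: "1 / (real m + 1) \<le> 1 / (real N + 1)" using mn by (simp add: frac_le)
        have i2: "1 / (real n + 1) \<le> 1 / (real N + 1)" using mn by (simp add: frac_le)
        have "NN (xs m - xs n) \<le> 2 * NN (xs m) + 2 * NN (xs n) - 4 * d" using par xs(1) by blast
        also have "\<dots> < 2 / (real m + 1) + 2 / (real n + 1)" using xs(2)[of m] xs(2)[of n] by simp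
        also have "\<dots> \<le> 4 / (real N + 1)" using i1 i2 by simp
        also have "\<dots> < e^2" by (rule N')
        finally have "NN (xs m - xs n) < e^2" .
        then have "sqrt (NN (xs m - xs n)) < sqrt (e^2)" by (rule real_sqrt_less_mono)
        then show "sqrt (Re (cinner (xs m - xs n) (xs m - xs n))) < e" using e by (simp add: NN_def)
      qed
    qed
    obtain u where u: "\<forall>e>0. \<exists>N. \<forall>n\<ge>N. sqrt (Re (cinner (xs n - u) (xs n - u))) < e"
      using complete[OF cauchy] by blast
    have lim: "(\<lambda>n. hnorm (xs n - u)) \<longlonglongrightarrow> 0"
    proof -
      have ab: "\<bar>sqrt (Re (cinner v v))\<bar> = sqrt (Re (cinner v v))" for v :: 'a
        using cinner_ge_zero[of v] by simp
      show ?thesis unfolding LIMSEQ_iff using u by (simp add: hnorm_def ab)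
    qed
    have fu: "f u = 1"
    proof -
      have le: "cmod (f u - 1) \<le> K * hnorm (xs n - u)" for n
      proof -
        have "f u - 1 = f (u - xs n)" using xs(1)[of n] by (simp add: fdiff A_def)
        then show ?thesis using bd[of "u - xs n"] by (simp add: hnorm_diff_commute)
      qed
      have l2: "(\<lambda>n. K * hnorm (xs n - u)) \<longlonglongrightarrow> 0"
        using tendsto_mult[OF tendsto_const lim, of K] by simp
      have "\<exists>N. \<forall>n\<ge>N. cmod (f u - 1) \<le> K * hnorm (xs n - u)" using le by blast
      from LIMSEQ_le_const[OF l2 this] have "cmod (f u - 1) \<le> 0" .
      then show ?thesis by simp
    qed
    have limn: "(\<lambda>n. hnorm (xs n)) \<longlonglongrightarrow> hnorm u"
      unfolding LIMSEQ_iff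
    proof (intro allI impI)
      fix r :: real assume r: "r > 0"
      obtain N where N: "\<forall>n\<ge>N. norm (hnorm (xs n - u) - 0) < r" using lim r unfolding LIMSEQ_iff by blast
      show "\<exists>no. \<forall>n\<ge>no. norm (hnorm (xs n) - hnorm u) < r"
      proof (intro exI allI impI)
        fix n assume "N \<le> n"
        then have h: "hnorm (xs n - u) < r" using N by simp
        have t1: "hnorm (xs n) \<le> hnorm (xs n - u) + hnorm u"
          using hnorm_triangle[of "xs n - u" u] by simp
        have t2: "hnorm u \<le> hnorm (u - xs n) + hnorm (xs n)"
          using hnorm_triangle[of "u - xs n" "xs n"] by simp
        show "norm (hnorm (xs n) - hnorm u) < r"
          using h t1 t2 hnorm_diff_commute[of u "xs n"] by simp
      qed
    qed
    have limd: "(\<lambda>n. NN (xs n)) \<longlonglongrightarrow> d"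
    proof (rule tendsto_sandwich[of "\<lambda>n. d" _ _ "\<lambda>n. d + 1 / (real n + 1)"])
      show "\<forall>\<^sub>F n in sequentially. d \<le> NN (xs n)" using lowr xs(1) by (intro always_eventually) blast
      show "\<forall>\<^sub>F n in sequentially. NN (xs n) \<le> d + 1 / (real n + 1)"
        using xs(2) less_imp_le by (intro always_eventually) blast
      show "(\<lambda>n. d) \<longlonglongrightarrow> d" by simp
      have "(\<lambda>n. 1 / (real n + 1)) \<longlonglongrightarrow> 0"
        using LIMSEQ_inverse_real_of_nat by (simp add: inverse_eq_divide add.commute)
      then show "(\<lambda>n. d + 1 / (real n + 1)) \<longlonglongrightarrow> d"
        using tendsto_add[OF tendsto_const, of _ 0 sequentially d] by simp
    qed
    have "(\<lambda>n. (hnorm (xs n))^2) \<longlonglongrightarrow> (hnorm u)^2" using limn by (intro tendsto_intros)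
    then have "(\<lambda>n. NN (xs n)) \<longlonglongrightarrow> NN u" by (simp add: hnorm_NN NN_ge0)
    with limd have NNu: "NN u = d" using LIMSEQ_unique by blast
    have orth: "cinner w u = 0" if fw: "f w = 0" for w
    proof -
      define c where "c = cinner w u"
      define s where "s = 1 / (NN w + 1)"
      have s: "s > 0" "s * NN w \<le> 1" using NN_ge0[of w] by (auto simp: s_def field_simps)
      define t where "t = - (complex_of_real s * cnj c)"
      have "u + scaleC t w \<in> A" using fu fw by (simp add: A_def add sc)
      then have "d \<le> NN (u + scaleC t w)" by (rule lowr)
      also have "\<dots> = NN u + (cmod t)^2 * NN w + 2 * Re (cnj t * cinner u w)"
        by (simp add: NN_add NN_scale)
      finally have i: "0 \<le> (cmod t)^2 * NN w + 2 * Re (cnj t * cinner u w)" using NNu by simp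
      have uw: "cinner u w = cnj c" by (simp add: c_def cinner_commute[of u w])
      have ct: "(cmod t)^2 = s^2 * (cmod c)^2" using s by (simp add: t_def norm_mult power_mult_distrib)
      have r: "Re (cnj t * cinner u w) = - s * (cmod c)^2"
      proof -
        have "cnj t * cinner u w = - (complex_of_real s * (c * cnj c))" by (simp add: t_def uw)
        also have "\<dots> = complex_of_real (- s * (cmod c)^2)" by (simp add: complex_norm_square[symmetric])
        finally show ?thesis by simp
      qed
      have "0 \<le> s^2 * (cmod c)^2 * NN w - 2 * s * (cmod c)^2" using i ct r by simp
      moreover have "s^2 * (cmod c)^2 * NN w \<le> s * (cmod c)^2"
      proof -
        have "s^2 * (cmod c)^2 * NN w = (s * NN w) * (s * (cmod c)^2)" by (simp add: power2_eq_square)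
        also have "\<dots> \<le> 1 * (s * (cmod c)^2)" using s by (intro mult_right_mono) auto
        finally show ?thesis by simp
      qed
      ultimately have "s * (cmod c)^2 \<le> 0" by linarith
      then have "(cmod c)^2 \<le> 0" using s by (simp add: mult_le_0_iff)
      then show ?thesis by (simp add: c_def)
    qed
    have u0: "NN u > 0"
    proof -
      have "u \<noteq> 0" using fu f0 by auto
      then show ?thesis using NN_eq0 NN_ge0 by (metis less_eq_real_def)
    qed
    show ?thesis
    proof (intro exI allI)
      fix x
      have "f (x - scaleC (f x) u) = 0" by (simp add: fdiff sc fu)
      then have "cinner (x - scaleC (f x) u) u = 0" by (rule orth)
      then have xu: "cinner x u = f x * complex_of_real (NN u)"
        by (simp add: cinner_diff_left cinner_self)
      have "cinner x (scaleC (complex_of_real (1 / NN u)) u) = complex_of_real (1 / NN u) * cinner x u"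
        by simp
      also have "\<dots> = f x" using u0 by (simp add: xu)
      finally show "f x = cinner x (scaleC (complex_of_real (1 / NN u)) u)" by simp
    qed
  qed
qed

lemma BH_add: "T \<in> BH \<Longrightarrow> T (x + y) = T x + T y"
  by (simp add: BH_def clinear_op_def)
lemma BH_scale: "T \<in> BH \<Longrightarrow> T (scaleC a x) = scaleC a (T x)"
  by (simp add: BH_def clinear_op_def)
lemma BH_zero: "T \<in> BH \<Longrightarrow> T 0 = 0"
  using BH_add[of T 0 0] by simp
lemma BH_minus: "T \<in> BH \<Longrightarrow> T (- x) = - T x"
  using BH_scale[of T "-1" x] by simp
lemma BH_diff: "T \<in> BH \<Longrightarrow> T (x - y) = T x - T y"
proof -
  assume T: "T \<in> BH"
  have "T ((x - y) + y) = T (x - y) + T y" by (rule BH_add[OF T])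
  then show ?thesis by (simp add: eq_diff_eq)
qed
lemma BH_sum: "T \<in> BH \<Longrightarrow> T (\<Sum>i\<in>A. f i) = (\<Sum>i\<in>A. T (f i))"
  by (induct A rule: infinite_finite_induct) (auto simp: BH_zero BH_add)
lemma BH_bound:
  fixes T :: "'h::complex_hilbert \<Rightarrow> 'h"
  assumes T: "T \<in> BH" shows "\<exists>K\<ge>0. \<forall>x. hnorm (T x) \<le> K * hnorm x"
proof -
  obtain K where K: "\<And>x. hnorm (T x) \<le> K * hnorm x" using T by (auto simp: BH_def)
  have "hnorm (T x) \<le> max K 0 * hnorm x" for x :: 'h
  proof -
    have "K * hnorm x \<le> max K 0 * hnorm x" using hnorm_ge0[of x] by (intro mult_right_mono) auto
    then show ?thesis using K[of x] by linarith
  qed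
  then show ?thesis by (intro exI[of _ "max K 0"]) auto
qed

lemma adj_exists: assumes T: "T \<in> BH" shows "\<exists>S. \<forall>x y. cinner (T x) y = cinner x (S y)"
proof -
  obtain K where K: "K \<ge> 0" "\<And>x. hnorm (T x) \<le> K * hnorm x" using BH_bound[OF T] by blast
  have "\<forall>y. \<exists>z. \<forall>x. cinner (T x) y = cinner x z"
  proof
    fix y
    show "\<exists>z. \<forall>x. cinner (T x) y = cinner x z"
    proof (rule riesz[where K = "K * hnorm y"])
      show "cinner (T (x1 + x2)) y = cinner (T x1) y + cinner (T x2) y" for x1 x2
        by (simp add: BH_add[OF T] cinner_add_left)
      show "cinner (T (scaleC a x)) y = a * cinner (T x) y" for a x
        by (simp add: BH_scale[OF T])
      show "cmod (cinner (T x) y) \<le> K * hnorm y * hnorm x" for x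
      proof -
        have "cmod (cinner (T x) y) \<le> hnorm (T x) * hnorm y" by (rule CS')
        also have "\<dots> \<le> (K * hnorm x) * hnorm y" using K(2)[of x] hnorm_ge0[of y]
          by (intro mult_right_mono) auto
        finally show ?thesis by (simp add: algebra_simps)
      qed
    qed
  qed
  then show ?thesis by (rule choice[THEN exE]) blast
qed

lemma adj_prop: "T \<in> BH \<Longrightarrow> cinner (T x) y = cinner x (adj T y)"
  unfolding adj_def using someI_ex[OF adj_exists] by blast

lemma adj_prop2: "T \<in> BH \<Longrightarrow> cinner (adj T y) x = cinner y (T x)"
proof -
  assume T: "T \<in> BH"
  have "cinner (adj T y) x = cnj (cinner x (adj T y))" by (rule cinner_commute)
  also have "\<dots> = cnj (cinner (T x) y)" by (simp add: adj_prop[OF T])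
  also have "\<dots> = cinner y (T x)" by (simp add: cinner_commute[of y])
  finally show ?thesis .
qed

lemma adj_eqI: assumes S: "\<And>x y. cinner (T x) y = cinner x (S y)" shows "adj T = S"
proof -
  have ex: "\<exists>S. \<forall>x y. cinner (T x) y = cinner x (S y)" using S by blast
  have A: "\<forall>x y. cinner (T x) y = cinner x (adj T y)" unfolding adj_def using someI_ex[OF ex] by blast
  show ?thesis
  proof
    fix y
    show "adj T y = S y" by (rule inner_ext) (simp add: A[rule_format, symmetric] S)
  qed
qed

lemma adj_adj: "T \<in> BH \<Longrightarrow> adj (adj T) = T"
  by (rule adj_eqI) (simp add: adj_prop2)

lemma adj_op_add: "S \<in> BH \<Longrightarrow> T \<in> BH \<Longrightarrow> adj (op_add S T) = op_add (adj S) (adj T)"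
  by (rule adj_eqI) (simp add: op_add_def cinner_add_left cinner_add_right adj_prop)

lemma adj_op_scale: "T \<in> BH \<Longrightarrow> adj (op_scale c T) = op_scale (cnj c) (adj T)"
  by (rule adj_eqI) (simp add: op_scale_def adj_prop)

lemma adj_op_zero: "adj op_zero = op_zero"
  by (rule adj_eqI) (simp add: op_zero_def)



lemma polar:
  fixes A :: "nat \<Rightarrow> nat \<Rightarrow> 'h::complex_hilbert \<Rightarrow> 'h"
  assumes add: "\<And>i j x y. i < n \<Longrightarrow> j < n \<Longrightarrow> A i j (x + y) = A i j x + A i j y"
    and sc: "\<And>i j c x. i < n \<Longrightarrow> j < n \<Longrightarrow> A i j (scaleC c x) = scaleC c (A i j x)"
    and Q: "\<And>\<xi>. (\<Sum>i<n. \<Sum>j<n. cinner (A i j (\<xi> j)) (\<xi> i)) = 0"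
    and i0: "i0 < n" and j0: "j0 < n"
  shows "A i0 j0 a = 0"
proof -
  define B where "B \<xi> \<eta> = (\<Sum>i<n. \<Sum>j<n. cinner (A i j (\<xi> j)) (\<eta> i))" for \<xi> \<eta>
  have A0: "A i j 0 = 0" if "i < n" "j < n" for i j
    using add[OF that, of 0 0] by simp
  have Bd: "B \<xi> \<xi> = 0" for \<xi> using Q by (simp add: B_def)
  have exp: "B (\<lambda>k. \<xi> k + scaleC t (\<eta> k)) (\<lambda>k. \<xi> k + scaleC t (\<eta> k))
      = B \<xi> \<xi> + cnj t * B \<xi> \<eta> + t * B \<eta> \<xi> + t * cnj t * B \<eta> \<eta>" for \<xi> \<eta> t
  proof -
    have "cinner (A i j (\<xi> j + scaleC t (\<eta> j))) (\<xi> i + scaleC t (\<eta> i))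
      = cinner (A i j (\<xi> j)) (\<xi> i) + cnj t * cinner (A i j (\<xi> j)) (\<eta> i)
        + t * cinner (A i j (\<eta> j)) (\<xi> i) + t * cnj t * cinner (A i j (\<eta> j)) (\<eta> i)"
      if "i < n" "j < n" for i j
      using that by (simp add: add sc cinner_add_left cinner_add_right algebra_simps)
    then have "B (\<lambda>k. \<xi> k + scaleC t (\<eta> k)) (\<lambda>k. \<xi> k + scaleC t (\<eta> k))
      = (\<Sum>i<n. \<Sum>j<n. cinner (A i j (\<xi> j)) (\<xi> i) + cnj t * cinner (A i j (\<xi> j)) (\<eta> i)
        + t * cinner (A i j (\<eta> j)) (\<xi> i) + t * cnj t * cinner (A i j (\<eta> j)) (\<eta> i))"
      unfolding B_def by (intro sum.cong refl) auto
    then show ?thesis by (simp add: B_def sum.distrib sum_distrib_left)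
  qed
  have BB: "B \<xi> \<eta> = 0" for \<xi> \<eta>
  proof -
    have 1: "B \<xi> \<eta> + B \<eta> \<xi> = 0" using exp[of \<xi> 1 \<eta>] Bd by simp
    have 2: "- \<i> * B \<xi> \<eta> + \<i> * B \<eta> \<xi> = 0" using exp[of \<xi> \<i> \<eta>] Bd by simp
    from 1 2 show ?thesis by (simp add: algebra_simps)
  qed
  define b where "b = A i0 j0 a"
  have "B (\<lambda>k. if k = j0 then a else 0) (\<lambda>k. if k = i0 then b else 0) = cinner b b"
  proof -
    have "cinner (A i j (if j = j0 then a else 0)) (if i = i0 then b else 0)
        = (if i = i0 then (if j = j0 then cinner b b else 0) else 0)" if "i < n" "j < n" for i j
      using that A0 by (auto simp: b_def)
    then have "B (\<lambda>k. if k = j0 then a else 0) (\<lambda>k. if k = i0 then b else 0)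
       = (\<Sum>i<n. \<Sum>j<n. (if i = i0 then (if j = j0 then cinner b b else 0) else 0))"
      unfolding B_def by (intro sum.cong refl) auto
    also have "\<dots> = (\<Sum>i<n. if i = i0 then cinner b b else 0)"
      by (intro sum.cong refl) (simp add: j0)
    also have "\<dots> = cinner b b" using i0 by simp
    finally show ?thesis .
  qed
  then have "cinner b b = 0" using BB by simp
  then show ?thesis using cinner_eq_zero[of b] by (simp add: b_def)
qed

lemma vsum_eval: "vsum op_add op_zero g n \<xi> = (\<Sum>i<n. g i \<xi>)"
  by (induct n) (simp_all add: op_add_def op_zero_def)

lemma half_sum: "scaleC (1/2) (y + a) + scaleC (1/2) (y + - a) = (y::'h::complex_hilbert)"
proof -
  have "scaleC (1/2) (y + a) + scaleC (1/2) (y + - a) = scaleC (1/2) y + scaleC (1/2) y"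
    by (simp add: scaleC_add_right scaleC_diff_right algebra_simps)
  also have "\<dots> = scaleC (1/2 + 1/2) y" by (simp only: scaleC_add_left)
  also have "\<dots> = y" by simp
  finally show ?thesis .
qed

locale PS =
  fixes V :: "('h::complex_hilbert \<Rightarrow> 'h) set" and p :: "'h \<Rightarrow> 'h"
  assumes cV: "concrete_opsys V" and pV: "p \<in> V" and pr: "is_projection p"
begin

lemma V_BH: "x \<in> V \<Longrightarrow> x \<in> BH" using cV by (auto simp: concrete_opsys_def)
lemma V_add: "x \<in> V \<Longrightarrow> y \<in> V \<Longrightarrow> op_add x y \<in> V" using cV by (auto simp: concrete_opsys_def)
lemma V_scale: "x \<in> V \<Longrightarrow> op_scale c x \<in> V" using cV by (auto simp: concrete_opsys_def)
lemma V_zero: "op_zero \<in> V" using cV by (auto simp: concrete_opsys_def)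
lemma V_adj: "x \<in> V \<Longrightarrow> adj x \<in> V" using cV by (auto simp: concrete_opsys_def)
lemma op_diff_eq: "op_add x (op_scale (-1) y) = (\<lambda>\<xi>. x \<xi> - y \<xi>)"
  by (rule ext) (simp add: op_add_def op_scale_def)
lemma V_diff: "x \<in> V \<Longrightarrow> y \<in> V \<Longrightarrow> (\<lambda>\<xi>. x \<xi> - y \<xi>) \<in> V"
proof -
  assume a: "x \<in> V" "y \<in> V"
  have "op_add x (op_scale (-1) y) \<in> V" using a by (intro V_add V_scale)
  then show ?thesis by (simp only: op_diff_eq)
qed
lemma vsum_V: "(\<And>i. i < n \<Longrightarrow> g i \<in> V) \<Longrightarrow> vsum op_add op_zero g n \<in> V"
  by (induct n) (simp_all add: V_zero V_add)

lemma p_BH: "p \<in> BH" using pr by (simp add: is_projection_def)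
lemma p_adj: "adj p = p" using pr by (simp add: is_projection_def)
lemma pp: "p (p x) = p x"
proof -
  have "p \<circ> p = p" using pr by (simp add: is_projection_def)
  then show ?thesis by (metis comp_apply)
qed
lemma p_sym: "cinner (p x) y = cinner x (p y)" using adj_prop[OF p_BH] p_adj by simp
lemma p_NN: "cinner (p x) x = complex_of_real (NN (p x))"
proof -
  have "cinner (p x) x = cinner (p (p x)) x" by (simp add: pp)
  also have "\<dots> = cinner (p x) (p x)" by (rule p_sym)
  finally show ?thesis by (simp add: cinner_self)
qed

definition KK where "KK = {x \<in> V. \<forall>\<xi>. p (x (p \<xi>)) = 0}"

lemma KK_V: "x \<in> KK \<Longrightarrow> x \<in> V" by (simp add: KK_def)
lemma KK_zero: "op_zero \<in> KK"
proof -
  have "\<forall>\<xi>. p (op_zero (p \<xi>)) = 0" by (simp add: op_zero_def BH_zero[OF p_BH])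
  then show ?thesis using V_zero by (simp add: KK_def)
qed
lemma KK_add: assumes "x \<in> KK" "y \<in> KK" shows "op_add x y \<in> KK"
proof -
  have "\<forall>\<xi>. p (op_add x y (p \<xi>)) = 0" using assms by (simp add: KK_def op_add_def BH_add[OF p_BH])
  then show ?thesis using V_add assms by (simp add: KK_def)
qed
lemma KK_scale: assumes "x \<in> KK" shows "op_scale c x \<in> KK"
proof -
  have "\<forall>\<xi>. p (op_scale c x (p \<xi>)) = 0" using assms by (simp add: KK_def op_scale_def BH_scale[OF p_BH])
  then show ?thesis using V_scale assms by (simp add: KK_def)
qed
lemma KK_diff: "x \<in> KK \<Longrightarrow> y \<in> KK \<Longrightarrow> (\<lambda>\<xi>. x \<xi> - y \<xi>) \<in> KK"
  by (simp add: KK_def V_diff BH_diff[OF p_BH])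
lemma KK_adj: assumes x: "x \<in> KK" shows "adj x \<in> KK"
proof -
  have xV: "x \<in> V" and xk: "\<And>\<xi>. p (x (p \<xi>)) = 0" using x by (auto simp: KK_def)
  have "p (adj x (p \<xi>)) = 0" for \<xi>
  proof -
    have "cinner w (p (adj x (p \<xi>))) = cinner w 0" for w
    proof -
      have "cinner w (p (adj x (p \<xi>))) = cinner (p w) (adj x (p \<xi>))" by (simp add: p_sym)
      also have "\<dots> = cinner (x (p w)) (p \<xi>)" by (simp add: adj_prop[OF V_BH[OF xV]])
      also have "\<dots> = cinner (p (x (p w))) \<xi>" by (simp add: p_sym)
      finally show ?thesis by (simp add: xk)
    qed
    then show ?thesis by (rule inner_ext)
  qed
  then show ?thesis using V_adj[OF xV] by (simp add: KK_def)
qed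

lemma C1_char: "x \<in> C1 V p \<longleftrightarrow> x \<in> V \<and> adj x = x \<and>
   (\<forall>v. Im (cinner (p (x (p v))) v) = 0 \<and> Re (cinner (p (x (p v))) v) \<ge> 0)"
proof -
  let ?M = "(\<lambda>i j. if i = 0 \<and> j = 0 then x else op_zero)"
  have m: "?M \<in> matc V op_zero 1 \<longleftrightarrow> x \<in> V" by (auto simp: matc_def V_zero)
  have h: "herm adj 1 ?M \<longleftrightarrow> adj x = x" by (simp add: herm_def)
  have q: "(\<Sum>i<1. \<Sum>j<1. cinner ((p \<circ> ?M i j \<circ> p) (\<xi> j)) (\<xi> i)) = cinner (p (x (p (\<xi> 0)))) (\<xi> 0)"
    for \<xi> :: "nat \<Rightarrow> 'h" by simp
  have "(\<forall>\<xi>::nat \<Rightarrow> 'h. Im (cinner (p (x (p (\<xi> 0)))) (\<xi> 0)) = 0 \<and> Re (cinner (p (x (p (\<xi> 0)))) (\<xi> 0)) \<ge> 0)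
      \<longleftrightarrow> (\<forall>v. Im (cinner (p (x (p v))) v) = 0 \<and> Re (cinner (p (x (p v))) v) \<ge> 0)"
  proof
    assume "\<forall>\<xi>::nat \<Rightarrow> 'h. Im (cinner (p (x (p (\<xi> 0)))) (\<xi> 0)) = 0 \<and> Re (cinner (p (x (p (\<xi> 0)))) (\<xi> 0)) \<ge> 0"
    note A = this
    show "\<forall>v. Im (cinner (p (x (p v))) v) = 0 \<and> Re (cinner (p (x (p v))) v) \<ge> 0"
    proof (intro allI)
      fix v
      from A[rule_format, of "\<lambda>_. v"]
      show "Im (cinner (p (x (p v))) v) = 0 \<and> Re (cinner (p (x (p v))) v) \<ge> 0" by simp
    qed
  qed auto
  then show ?thesis unfolding C1_def Cp_def Let_def using m h q by simp
qed

lemma H0_KK: assumes "a \<in> C1 V p \<inter> op_scale (-1) ` C1 V p" shows "a \<in> KK"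
proof -
  from assms obtain b where a: "a \<in> C1 V p" and b: "b \<in> C1 V p" and ab: "a = op_scale (-1) b" by blast
  have aV: "a \<in> V" using a C1_char by blast
  have z: "cinner (p (a (p v))) v = 0" for v
  proof -
    have pa: "p (a (p v)) = - p (b (p v))" by (simp add: ab op_scale_def BH_minus[OF p_BH])
    have r1: "Re (cinner (p (a (p v))) v) \<ge> 0" "Im (cinner (p (a (p v))) v) = 0" using a C1_char by blast+
    have r2: "Re (cinner (p (b (p v))) v) \<ge> 0" using b C1_char by blast
    show ?thesis using r1 r2 pa by (simp add: complex_eq_iff)
  qed
  have "p (a (p w)) = 0" for w
  proof -
    let ?A = "\<lambda>(i::nat) (j::nat) v. p (a (p v))"
    have "?A 0 0 w = 0"
    proof (rule polar[of 1 ?A])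
      show "?A i j (x + y) = ?A i j x + ?A i j y" for i j x y
        by (simp add: BH_add[OF p_BH] BH_add[OF V_BH[OF aV]])
      show "?A i j (scaleC c x) = scaleC c (?A i j x)" for i j c x
        by (simp add: BH_scale[OF p_BH] BH_scale[OF V_BH[OF aV]])
      show "(\<Sum>i<1. \<Sum>j<1. cinner (?A i j (\<xi> j)) (\<xi> i)) = 0" for \<xi> :: "nat \<Rightarrow> 'h" by (simp add: z)
    qed simp_all
    then show ?thesis by simp
  qed
  then show ?thesis using aV by (simp add: KK_def)
qed

lemma J_sub_KK: "Jp V p \<subseteq> KK"
proof
  fix T assume "T \<in> Jp V p"
  then obtain k :: nat and c a where a: "\<forall>i<k. a i \<in> C1 V p \<inter> op_scale (-1) ` C1 V p"
    and T: "T = (\<lambda>x. \<Sum>i<k. scaleC (c i) (a i x))"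
    unfolding Jp_def cspan_def mem_Collect_eq by blast
  have aK: "\<And>i. i < k \<Longrightarrow> a i \<in> KK" using a H0_KK by blast
  have "T = vsum op_add op_zero (\<lambda>i. op_scale (c i) (a i)) k"
    by (rule ext) (simp add: T vsum_eval op_scale_def)
  moreover have "vsum op_add op_zero (\<lambda>i. op_scale (c i) (a i)) k \<in> V"
    using aK by (intro vsum_V V_scale KK_V) auto
  ultimately have TV: "T \<in> V" by simp
  have "p (T (p \<xi>)) = 0" for \<xi>
  proof -
    have "p (T (p \<xi>)) = (\<Sum>i<k. scaleC (c i) (p (a i (p \<xi>))))"
      by (simp add: T BH_sum[OF p_BH] BH_scale[OF p_BH])
    also have "\<dots> = 0" using aK by (simp add: KK_def)
    finally show ?thesis .
  qed
  then show "T \<in> KK" using TV by (simp add: KK_def)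
qed

lemma KK_sa_H0: assumes "h \<in> KK" "adj h = h" shows "h \<in> C1 V p \<inter> op_scale (-1) ` C1 V p"
proof -
  have C: "g \<in> C1 V p" if "g \<in> KK" "adj g = g" for g
    using that by (simp add: C1_char KK_def)
  let ?g = "op_scale (-1) h"
  have hV: "h \<in> V" using assms KK_V by blast
  have "?g \<in> KK" using assms KK_scale by blast
  moreover have "adj ?g = ?g" using assms(2) by (simp add: adj_op_scale V_BH[OF hV])
  ultimately have "?g \<in> C1 V p" using C by blast
  moreover have "h = op_scale (-1) ?g" by (rule ext) (simp add: op_scale_def)
  ultimately show ?thesis using C assms by blast
qed

lemma KK_sub_J: "KK \<subseteq> Jp V p"
proof
  fix x assume x: "x \<in> KK"
  have xV: "x \<in> V" using x KK_V by blast
  have xB: "x \<in> BH" "adj x \<in> BH" using xV V_BH V_adj by blast+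
  define h1 where "h1 = op_scale (1/2) (op_add x (adj x))"
  define h2 where "h2 = op_scale (- \<i>/2) (op_add x (op_scale (-1) (adj x)))"
  have h1K: "h1 \<in> KK" unfolding h1_def using x by (intro KK_scale KK_add KK_adj)
  have h2K: "h2 \<in> KK" unfolding h2_def using x by (intro KK_scale KK_add KK_adj)
  have ah1: "adj h1 = h1"
  proof -
    have "adj h1 = op_scale (1/2) (op_add (adj x) x)"
      unfolding h1_def using xB
      by (simp add: adj_op_scale adj_op_add V_BH V_add adj_adj xV V_adj)
    also have "\<dots> = h1" unfolding h1_def by (rule ext) (simp add: op_scale_def op_add_def add.commute)
    finally show ?thesis .
  qed
  have ah2: "adj h2 = h2"
  proof -
    have "adj h2 = op_scale (\<i>/2) (op_add (adj x) (op_scale (-1) x))"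
      unfolding h2_def using xB
      by (simp add: adj_op_scale adj_op_add V_BH V_add V_scale adj_adj xV V_adj)
    also have "\<dots> = h2" unfolding h2_def
      by (rule ext) (simp add: op_scale_def op_add_def scaleC_add_right scaleC_diff_right add.commute)
    finally show ?thesis .
  qed
  define a where "a = (\<lambda>i::nat. if i = 0 then h1 else h2)"
  define c where "c = (\<lambda>i::nat. if i = 0 then 1 else \<i>)"
  have H1: "h1 \<in> C1 V p \<inter> op_scale (-1) ` C1 V p" by (rule KK_sa_H0[OF h1K ah1])
  have H2: "h2 \<in> C1 V p \<inter> op_scale (-1) ` C1 V p" by (rule KK_sa_H0[OF h2K ah2])
  have aa: "\<forall>i<(2::nat). a i \<in> C1 V p \<inter> op_scale (-1) ` C1 V p"
    unfolding a_def using H1 H2 by auto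
  have xx: "x = (\<lambda>\<xi>. \<Sum>i<2. scaleC (c i) (a i \<xi>))"
  proof
    fix \<xi>
    have "(\<Sum>i<2. scaleC (c i) (a i \<xi>)) = scaleC (1/2) (x \<xi> + adj x \<xi>) + scaleC (1/2) (x \<xi> + - adj x \<xi>)"
      by (simp add: numeral_2_eq_2 a_def c_def h1_def h2_def op_scale_def op_add_def)
    also have "\<dots> = x \<xi>" by (rule half_sum)
    finally show "x \<xi> = (\<Sum>i<2. scaleC (c i) (a i \<xi>))" by simp
  qed
  have "\<exists>k (c::nat \<Rightarrow> complex) a. (\<forall>i<k. a i \<in> C1 V p \<inter> op_scale (-1) ` C1 V p) \<and>
                  x = (\<lambda>\<xi>. \<Sum>i<k. scaleC (c i) (a i \<xi>))"
    by (rule exI[of _ 2], rule exI[of _ c], rule exI[of _ a]) (rule conjI[OF aa xx])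
  then show "x \<in> Jp V p" unfolding Jp_def cspan_def by simp
qed

lemma J_eq: "Jp V p = KK" using J_sub_KK KK_sub_J by blast

end

lemma op_add_assoc: "op_add (op_add a b) c = op_add a (op_add b c)"
  by (rule ext) (simp add: op_add_def add.assoc)
lemma op_add_comm: "op_add a b = op_add b a"
  by (rule ext) (simp add: op_add_def add.commute)
lemma op_add_zero_left: "op_add op_zero a = a"
  by (rule ext) (simp add: op_add_def op_zero_def)
lemma op_add_neg: "op_add a (op_scale (-1) a) = op_zero"
  by (rule ext) (simp add: op_add_def op_scale_def op_zero_def)
lemma op_scale_add_right: "op_scale c (op_add a b) = op_add (op_scale c a) (op_scale c b)"
  by (rule ext) (simp add: op_add_def op_scale_def scaleC_add_right)
lemma op_scale_add_left: "op_scale (c + d) a = op_add (op_scale c a) (op_scale d a)"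
  by (rule ext) (simp add: op_add_def op_scale_def scaleC_add_left)
lemma op_scale_scale: "op_scale c (op_scale d a) = op_scale (c * d) a"
  by (rule ext) (simp add: op_scale_def)
lemma op_scale_one: "op_scale 1 a = a"
  by (rule ext) (simp add: op_scale_def)
lemma op_scale_zero: "op_scale c op_zero = op_zero"
  by (rule ext) (simp add: op_scale_def op_zero_def)
lemma op_add_zero_zero: "op_add op_zero op_zero = op_zero"
  by (rule ext) (simp add: op_add_def op_zero_def)

context PS begin

abbreviation J where "J \<equiv> Jp V p"

lemma J_mem: "x \<in> J \<longleftrightarrow> x \<in> V \<and> (\<forall>\<xi>. p (x (p \<xi>)) = 0)" by (simp add: J_eq KK_def)

lemma mem_coset: "b \<in> coset J a \<longleftrightarrow> (\<lambda>\<xi>. b \<xi> - a \<xi>) \<in> J"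
proof
  assume "b \<in> coset J a"
  then obtain j where j: "j \<in> J" "b = op_add a j" by (auto simp: coset_def)
  have "(\<lambda>\<xi>. b \<xi> - a \<xi>) = j" by (rule ext) (simp add: j op_add_def)
  then show "(\<lambda>\<xi>. b \<xi> - a \<xi>) \<in> J" using j by simp
next
  assume a: "(\<lambda>\<xi>. b \<xi> - a \<xi>) \<in> J"
  have "b = op_add a (\<lambda>\<xi>. b \<xi> - a \<xi>)" by (rule ext) (simp add: op_add_def)
  then show "b \<in> coset J a" using a by (auto simp: coset_def)
qed

lemma coset_self: "a \<in> coset J a"
proof -
  have "(\<lambda>\<xi>. a \<xi> - a \<xi>) = op_zero" by (rule ext) (simp add: op_zero_def)
  then show ?thesis using KK_zero J_eq mem_coset by simp
qed

lemma coset_eq: "coset J a = coset J b \<longleftrightarrow> (\<lambda>\<xi>. a \<xi> - b \<xi>) \<in> J"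
proof
  assume "coset J a = coset J b"
  then have "a \<in> coset J b" using coset_self by blast
  then show "(\<lambda>\<xi>. a \<xi> - b \<xi>) \<in> J" using mem_coset by blast
next
  assume ab: "(\<lambda>\<xi>. a \<xi> - b \<xi>) \<in> J"
  show "coset J a = coset J b"
  proof (rule set_eqI)
    fix x
    have e1: "(\<lambda>\<xi>. x \<xi> - b \<xi>) = op_add (\<lambda>\<xi>. x \<xi> - a \<xi>) (\<lambda>\<xi>. a \<xi> - b \<xi>)"
      by (rule ext) (simp add: op_add_def)
    have e2: "(\<lambda>\<xi>. x \<xi> - a \<xi>) = (\<lambda>\<xi>. (\<lambda>\<xi>. x \<xi> - b \<xi>) \<xi> - (\<lambda>\<xi>. a \<xi> - b \<xi>) \<xi>)"
      by (rule ext) simp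
    show "x \<in> coset J a \<longleftrightarrow> x \<in> coset J b"
      unfolding mem_coset
    proof
      assume "(\<lambda>\<xi>. x \<xi> - a \<xi>) \<in> J"
      then show "(\<lambda>\<xi>. x \<xi> - b \<xi>) \<in> J" unfolding e1 using ab J_eq KK_add by simp
    next
      assume "(\<lambda>\<xi>. x \<xi> - b \<xi>) \<in> J"
      then have "(\<lambda>\<xi>. (x \<xi> - b \<xi>) - (a \<xi> - b \<xi>)) \<in> KK"
        using ab J_eq KK_diff[of "\<lambda>\<xi>. x \<xi> - b \<xi>" "\<lambda>\<xi>. a \<xi> - b \<xi>"] by simp
      moreover have "(\<lambda>\<xi>. (x \<xi> - b \<xi>) - (a \<xi> - b \<xi>)) = (\<lambda>\<xi>. x \<xi> - a \<xi>)"
        by (rule ext) (simp add: algebra_simps)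
      ultimately show "(\<lambda>\<xi>. x \<xi> - a \<xi>) \<in> J" using J_eq by simp
    qed
  qed
qed

lemma qrep_in: "qrep (coset J a) \<in> coset J a"
  unfolding qrep_def by (rule someI[where x=a]) (rule coset_self)

lemma qrep_diff: "(\<lambda>\<xi>. qrep (coset J a) \<xi> - a \<xi>) \<in> J"
  using qrep_in mem_coset by blast

lemma coset_qrep: "coset J (qrep (coset J a)) = coset J a"
  using qrep_diff coset_eq by blast

lemma qadd_coset: "qadd J (coset J a) (coset J b) = coset J (op_add a b)"
proof -
  let ?r = "qrep (coset J a)" and ?s = "qrep (coset J b)"
  have "(\<lambda>\<xi>. op_add ?r ?s \<xi> - op_add a b \<xi>) = op_add (\<lambda>\<xi>. ?r \<xi> - a \<xi>) (\<lambda>\<xi>. ?s \<xi> - b \<xi>)"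
    by (rule ext) (simp add: op_add_def)
  moreover have "op_add (\<lambda>\<xi>. ?r \<xi> - a \<xi>) (\<lambda>\<xi>. ?s \<xi> - b \<xi>) \<in> J"
    using qrep_diff[of a] qrep_diff[of b] J_eq KK_add by simp
  ultimately show ?thesis unfolding qadd_def coset_eq by simp
qed

lemma qscale_coset: "qscale J c (coset J a) = coset J (op_scale c a)"
proof -
  let ?r = "qrep (coset J a)"
  have "(\<lambda>\<xi>. op_scale c ?r \<xi> - op_scale c a \<xi>) = op_scale c (\<lambda>\<xi>. ?r \<xi> - a \<xi>)"
    by (rule ext) (simp add: op_scale_def scaleC_diff_right)
  moreover have "op_scale c (\<lambda>\<xi>. ?r \<xi> - a \<xi>) \<in> J"
    using qrep_diff[of a] J_eq KK_scale by simp
  ultimately show ?thesis unfolding qscale_def coset_eq by simp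
qed

lemma qstar_coset: assumes aV: "a \<in> V" shows "qstar J (coset J a) = coset J (adj a)"
proof -
  let ?r = "qrep (coset J a)"
  define d where "d = (\<lambda>\<xi>. ?r \<xi> - a \<xi>)"
  have dJ: "d \<in> J" unfolding d_def by (rule qrep_diff)
  have dV: "d \<in> V" using dJ J_mem by blast
  have r: "?r = op_add a d" by (rule ext) (simp add: op_add_def d_def)
  have "adj ?r = op_add (adj a) (adj d)" unfolding r using aV dV by (simp add: adj_op_add V_BH)
  then have "(\<lambda>\<xi>. adj ?r \<xi> - adj a \<xi>) = adj d" by (simp add: op_add_def)
  moreover have "adj d \<in> J" using dJ J_eq KK_adj by simp
  ultimately show ?thesis unfolding qstar_def coset_eq by simp
qed

lemma quot_ball: "(\<forall>x\<in>quot V J. P x) \<longleftrightarrow> (\<forall>a\<in>V. P (coset J a))"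
  by (auto simp: quot_def)
lemma quot_bex: "(\<exists>x\<in>quot V J. P x) \<longleftrightarrow> (\<exists>a\<in>V. P (coset J a))"
  by (auto simp: quot_def)
lemma coset_in_quot: "a \<in> V \<Longrightarrow> coset J a \<in> quot V J"
  by (auto simp: quot_def)

lemma qvs: "cvector_space (quot V J) (qadd J) (qscale J) (coset J op_zero)"
proof -
  have inv: "\<forall>a\<in>V. \<exists>b\<in>V. coset J (op_add a b) = coset J op_zero"
  proof
    fix a assume "a \<in> V"
    then show "\<exists>b\<in>V. coset J (op_add a b) = coset J op_zero"
      by (intro bexI[of _ "op_scale (-1) a"]) (simp_all add: op_add_neg V_scale)
  qed
  have comm: "\<forall>a\<in>V. \<forall>b\<in>V. coset J (op_add a b) = coset J (op_add b a)"
    using op_add_comm by metis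
  show ?thesis
    unfolding cvector_space_def quot_ball quot_bex
    by (simp add: coset_in_quot V_zero V_add V_scale qadd_coset qscale_coset op_add_assoc
      op_add_zero_left op_scale_add_right op_scale_add_left op_scale_scale op_scale_one inv comm)
qed

lemma qsvs: "star_vector_space (quot V J) (qadd J) (qscale J) (coset J op_zero) (qstar J)"
  unfolding star_vector_space_def
proof (intro conjI qvs)
  show "\<forall>x\<in>quot V J. qstar J x \<in> quot V J"
    unfolding quot_ball by (simp add: qstar_coset coset_in_quot V_adj)
  show "\<forall>x\<in>quot V J. qstar J (qstar J x) = x"
    unfolding quot_ball by (simp add: qstar_coset V_adj adj_adj V_BH)
  show "\<forall>x\<in>quot V J. \<forall>y\<in>quot V J. qstar J (qadd J x y) = qadd J (qstar J x) (qstar J y)"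
    unfolding quot_ball by (simp add: qstar_coset qadd_coset V_adj V_add adj_op_add V_BH)
  show "\<forall>c. \<forall>x\<in>quot V J. qstar J (qscale J c x) = qscale J (cnj c) (qstar J x)"
    unfolding quot_ball by (simp add: qstar_coset qscale_coset V_adj V_scale adj_op_scale V_BH)
qed

end

definition qf :: "('h::complex_hilbert \<Rightarrow> 'h) \<Rightarrow> nat \<Rightarrow> (nat \<Rightarrow> nat \<Rightarrow> 'h \<Rightarrow> 'h) \<Rightarrow> (nat \<Rightarrow> 'h) \<Rightarrow> complex"
  where "qf p n X \<xi> = (\<Sum>i<n. \<Sum>j<n. cinner ((p \<circ> X i j \<circ> p) (\<xi> j)) (\<xi> i))"

lemma Cp_iff: "X \<in> Cp V p n \<longleftrightarrow> X \<in> matc V op_zero n \<and> herm adj n X \<and>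
   (\<forall>\<xi>. Im (qf p n X \<xi>) = 0 \<and> Re (qf p n X \<xi>) \<ge> 0)"
  by (simp add: Cp_def qf_def Let_def)

lemma hh_le: "hnorm a * hnorm b \<le> NN a + NN (b::'h::complex_hilbert)"
proof -
  have "0 \<le> (hnorm a - hnorm b)^2" by simp
  then have "2 * (hnorm a * hnorm b) \<le> (hnorm a)^2 + (hnorm b)^2" by (simp add: power2_eq_square algebra_simps)
  moreover have "(hnorm a)^2 = NN a" "(hnorm b)^2 = NN b" by (simp_all add: hnorm_NN NN_ge0)
  moreover have "0 \<le> hnorm a * hnorm b" using hnorm_ge0[of a] hnorm_ge0[of b] by simp
  ultimately show ?thesis by linarith
qed

context PS begin

lemma qf_cong: assumes "\<And>i j v. i < n \<Longrightarrow> j < n \<Longrightarrow> p (A i j (p v)) = p (B i j (p v))"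
  shows "qf p n A \<xi> = qf p n B \<xi>"
  unfolding qf_def using assms by (intro sum.cong refl) simp

lemma qf_add: "qf p n (\<lambda>i j. op_add (X i j) (Y i j)) \<xi> = qf p n X \<xi> + qf p n Y \<xi>"
  unfolding qf_def by (simp add: op_add_def BH_add[OF p_BH] cinner_add_left sum.distrib)

lemma qf_scale: "qf p n (\<lambda>i j. op_scale c (X i j)) \<xi> = c * qf p n X \<xi>"
  unfolding qf_def by (simp add: op_scale_def BH_scale[OF p_BH] sum_distrib_left)

lemma qf_P: "qf p n (\<lambda>i j. if i = j then p else op_zero) \<xi> = complex_of_real (\<Sum>i<n. NN (p (\<xi> i)))"
proof -
  have "cinner ((p \<circ> (if i = j then p else op_zero) \<circ> p) (\<xi> j)) (\<xi> i)
      = (if i = j then complex_of_real (NN (p (\<xi> i))) else 0)" for i j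
    by (simp add: pp p_NN op_zero_def BH_zero[OF p_BH])
  then have "qf p n (\<lambda>i j. if i = j then p else op_zero) \<xi>
     = (\<Sum>i<n. \<Sum>j<n. if i = j then complex_of_real (NN (p (\<xi> i))) else 0)"
    unfolding qf_def by simp
  also have "\<dots> = (\<Sum>i<n. complex_of_real (NN (p (\<xi> i))))" by simp
  finally show ?thesis by simp
qed

lemma qf_herm_real:
  assumes XV: "\<And>i j. i < n \<Longrightarrow> j < n \<Longrightarrow> X i j \<in> V" and h: "herm adj n X"
  shows "Im (qf p n X \<xi>) = 0"
proof -
  define F where "F i j = cinner (p (X i j (p (\<xi> j)))) (\<xi> i)" for i j
  have sw: "cnj (F i j) = F j i" if "i < n" "j < n" for i j
  proof -
    have B: "X i j \<in> BH" using XV[OF that] V_BH by blast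
    have "cnj (F i j) = cinner (\<xi> i) (p (X i j (p (\<xi> j))))"
      by (simp add: F_def cinner_commute[of "\<xi> i"])
    also have "\<dots> = cinner (p (\<xi> i)) (X i j (p (\<xi> j)))" by (simp add: p_sym)
    also have "\<dots> = cinner (adj (X i j) (p (\<xi> i))) (p (\<xi> j))" by (simp add: adj_prop2[OF B])
    also have "\<dots> = cinner (X j i (p (\<xi> i))) (p (\<xi> j))" using h that by (simp add: herm_def)
    also have "\<dots> = F j i" by (simp add: F_def p_sym)
    finally show ?thesis .
  qed
  have q: "qf p n X \<xi> = (\<Sum>i<n. \<Sum>j<n. F i j)" by (simp add: qf_def F_def)
  have "cnj (qf p n X \<xi>) = (\<Sum>i<n. \<Sum>j<n. F j i)"
    unfolding q by (simp add: sw)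
  also have "\<dots> = (\<Sum>j<n. \<Sum>i<n. F j i)" by (rule sum.swap)
  also have "\<dots> = qf p n X \<xi>" by (simp add: q)
  finally have "cnj (qf p n X \<xi>) = qf p n X \<xi>" .
  then show ?thesis by (metis cnj.simps(2) complex_eq_iff neg_equal_zero)
qed

lemma qf_bound:
  assumes XV: "\<And>i j. i < n \<Longrightarrow> j < n \<Longrightarrow> X i j \<in> V"
  shows "\<exists>C\<ge>0. \<forall>\<xi>. cmod (qf p n X \<xi>) \<le> C * (\<Sum>i<n. NN (p (\<xi> i)))"
proof -
  define Kf where "Kf i j = (SOME K. K \<ge> 0 \<and> (\<forall>x. hnorm (X i j x) \<le> K * hnorm x))" for i j
  have Kf: "Kf i j \<ge> 0 \<and> (\<forall>x. hnorm (X i j x) \<le> Kf i j * hnorm x)" if "i < n" "j < n" for i j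
    unfolding Kf_def using BH_bound[OF V_BH[OF XV[OF that]]] by (rule someI_ex)
  define C where "C = 2 * (\<Sum>i<n. \<Sum>j<n. Kf i j)"
  have C0: "C \<ge> 0" unfolding C_def
  proof -
    have "0 \<le> (\<Sum>i<n. \<Sum>j<n. Kf i j)" using Kf by (intro sum_nonneg) auto
    then show "0 \<le> 2 * (\<Sum>i<n. \<Sum>j<n. Kf i j)" by simp
  qed
  have "cmod (qf p n X \<xi>) \<le> C * (\<Sum>i<n. NN (p (\<xi> i)))" for \<xi>
  proof -
    define S where "S = (\<Sum>i<n. NN (p (\<xi> i)))"
    have NS: "NN (p (\<xi> i)) \<le> S" if "i < n" for i
      unfolding S_def using that NN_ge0 by (intro member_le_sum) auto
    have T: "cmod (cinner ((p \<circ> X i j \<circ> p) (\<xi> j)) (\<xi> i)) \<le> Kf i j * (2 * S)"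
      if ij: "i < n" "j < n" for i j
    proof -
      have "cmod (cinner ((p \<circ> X i j \<circ> p) (\<xi> j)) (\<xi> i)) = cmod (cinner (X i j (p (\<xi> j))) (p (\<xi> i)))"
        by (simp add: p_sym)
      also have "\<dots> \<le> hnorm (X i j (p (\<xi> j))) * hnorm (p (\<xi> i))" by (rule CS')
      also have "\<dots> \<le> (Kf i j * hnorm (p (\<xi> j))) * hnorm (p (\<xi> i))"
        using Kf[OF ij] hnorm_ge0 by (intro mult_right_mono) auto
      also have "\<dots> = Kf i j * (hnorm (p (\<xi> j)) * hnorm (p (\<xi> i)))" by simp
      also have "\<dots> \<le> Kf i j * (NN (p (\<xi> j)) + NN (p (\<xi> i)))"
        using Kf[OF ij] hh_le by (intro mult_left_mono) auto
      also have "\<dots> \<le> Kf i j * (2 * S)"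
        using Kf[OF ij] NS[OF ij(1)] NS[OF ij(2)] by (intro mult_left_mono) auto
      finally show ?thesis .
    qed
    have "cmod (qf p n X \<xi>) \<le> (\<Sum>i<n. cmod (\<Sum>j<n. cinner ((p \<circ> X i j \<circ> p) (\<xi> j)) (\<xi> i)))"
      unfolding qf_def by (rule norm_sum)
    also have "\<dots> \<le> (\<Sum>i<n. \<Sum>j<n. cmod (cinner ((p \<circ> X i j \<circ> p) (\<xi> j)) (\<xi> i)))"
      by (intro sum_mono norm_sum)
    also have "\<dots> \<le> (\<Sum>i<n. \<Sum>j<n. Kf i j * (2 * S))"
      using T by (intro sum_mono) auto
    also have "\<dots> = (\<Sum>i<n. \<Sum>j<n. Kf i j) * (2 * S)" by (simp add: sum_distrib_right)
    also have "\<dots> = C * S" by (simp add: C_def)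
    finally show ?thesis by (simp add: S_def)
  qed
  then show ?thesis using C0 by blast
qed

lemma Cp_add: assumes X: "X \<in> Cp V p n" and Y: "Y \<in> Cp V p n"
  shows "(\<lambda>i j. op_add (X i j) (Y i j)) \<in> Cp V p n"
proof -
  have XX: "X \<in> matc V op_zero n" "herm adj n X" "\<And>\<xi>. Im (qf p n X \<xi>) = 0 \<and> Re (qf p n X \<xi>) \<ge> 0"
    using X by (auto simp: Cp_iff)
  have YY: "Y \<in> matc V op_zero n" "herm adj n Y" "\<And>\<xi>. Im (qf p n Y \<xi>) = 0 \<and> Re (qf p n Y \<xi>) \<ge> 0"
    using Y by (auto simp: Cp_iff)
  have m: "(\<lambda>i j. op_add (X i j) (Y i j)) \<in> matc V op_zero n"
    using XX(1) YY(1) by (auto simp: matc_def V_add op_add_zero_zero)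
  have h: "herm adj n (\<lambda>i j. op_add (X i j) (Y i j))"
    using XX(1,2) YY(1,2) by (auto simp: herm_def matc_def adj_op_add V_BH)
  show ?thesis unfolding Cp_iff using m h XX(3) YY(3) by (simp add: qf_add)
qed

lemma Cp_scale: assumes X: "X \<in> Cp V p n" and r: "r \<ge> 0"
  shows "(\<lambda>i j. op_scale (complex_of_real r) (X i j)) \<in> Cp V p n"
proof -
  have XX: "X \<in> matc V op_zero n" "herm adj n X" "\<And>\<xi>. Im (qf p n X \<xi>) = 0 \<and> Re (qf p n X \<xi>) \<ge> 0"
    using X by (auto simp: Cp_iff)
  have m: "(\<lambda>i j. op_scale (complex_of_real r) (X i j)) \<in> matc V op_zero n"
    using XX(1) by (auto simp: matc_def V_scale op_scale_zero)
  have h: "herm adj n (\<lambda>i j. op_scale (complex_of_real r) (X i j))"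
    using XX(1,2) by (auto simp: herm_def matc_def adj_op_scale V_BH)
  show ?thesis unfolding Cp_iff using m h XX(3) r by (simp add: qf_scale)
qed

end

lemma swap4: "(\<Sum>i\<in>A. \<Sum>j\<in>B. \<Sum>k\<in>D. \<Sum>l\<in>C. G i j k l)
   = (\<Sum>k\<in>D. \<Sum>l\<in>C. \<Sum>i\<in>A. \<Sum>j\<in>B. (G i j k l :: complex))"
proof -
  have "(\<Sum>i\<in>A. \<Sum>j\<in>B. \<Sum>k\<in>D. \<Sum>l\<in>C. G i j k l) = (\<Sum>i\<in>A. \<Sum>k\<in>D. \<Sum>j\<in>B. \<Sum>l\<in>C. G i j k l)"
    by (intro sum.cong refl) (rule sum.swap)
  also have "\<dots> = (\<Sum>k\<in>D. \<Sum>i\<in>A. \<Sum>j\<in>B. \<Sum>l\<in>C. G i j k l)"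
    by (rule sum.swap)
  also have "\<dots> = (\<Sum>k\<in>D. \<Sum>i\<in>A. \<Sum>l\<in>C. \<Sum>j\<in>B. G i j k l)"
    by (intro sum.cong refl) (rule sum.swap)
  also have "\<dots> = (\<Sum>k\<in>D. \<Sum>l\<in>C. \<Sum>i\<in>A. \<Sum>j\<in>B. G i j k l)"
    by (intro sum.cong refl) (rule sum.swap)
  finally show ?thesis .
qed

context PS begin

lemma conj_eval: "k < m \<Longrightarrow> l < m \<Longrightarrow> conj_mat op_add op_scale op_zero n m \<alpha> X k l x
   = (\<Sum>i<n. \<Sum>j<n. scaleC (cnj (\<alpha> i k) * \<alpha> j l) (X i j x))"
  by (simp add: conj_mat_def vsum_eval op_scale_def)

lemma Cp_conj: assumes X: "X \<in> Cp V p n"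
  shows "conj_mat op_add op_scale op_zero n m \<alpha> X \<in> Cp V p m"
proof -
  let ?E = "conj_mat op_add op_scale op_zero n m \<alpha> X"
  have XX: "X \<in> matc V op_zero n" "herm adj n X" "\<And>\<xi>. Im (qf p n X \<xi>) = 0 \<and> Re (qf p n X \<xi>) \<ge> 0"
    using X by (auto simp: Cp_iff)
  have XV: "\<And>i j. i < n \<Longrightarrow> j < n \<Longrightarrow> X i j \<in> V" using XX(1) by (simp add: matc_def)
  have XB: "\<And>i j. i < n \<Longrightarrow> j < n \<Longrightarrow> X i j \<in> BH" using XV V_BH by blast
  have Xh: "\<And>i j. i < n \<Longrightarrow> j < n \<Longrightarrow> adj (X i j) = X j i" using XX(2) by (simp add: herm_def)
  have m: "?E \<in> matc V op_zero m"
    unfolding matc_def conj_mat_def using XV by (auto intro!: vsum_V V_scale)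
  have h: "herm adj m ?E"
    unfolding herm_def
  proof (intro allI impI)
    fix k l assume kl: "k < m" "l < m"
    show "adj (?E k l) = ?E l k"
    proof (rule adj_eqI)
      fix x y
      have "cinner (?E k l x) y = (\<Sum>i<n. \<Sum>j<n. (cnj (\<alpha> i k) * \<alpha> j l) * cinner (X i j x) y)"
        using kl by (simp add: conj_eval cinner_sum_left)
      also have "\<dots> = (\<Sum>i<n. \<Sum>j<n. (cnj (\<alpha> i k) * \<alpha> j l) * cinner x (X j i y))"
        by (intro sum.cong refl) (simp add: adj_prop XB Xh)
      also have "\<dots> = (\<Sum>j<n. \<Sum>i<n. (cnj (\<alpha> i k) * \<alpha> j l) * cinner x (X j i y))"
        by (rule sum.swap)
      also have "\<dots> = cinner x (?E l k y)"
        using kl by (simp add: conj_eval cinner_sum_right mult.commute)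
      finally show "cinner (?E k l x) y = cinner x (?E l k y)" .
    qed
  qed
  have q: "qf p m ?E \<xi> = qf p n X (\<lambda>j. \<Sum>l<m. scaleC (\<alpha> j l) (\<xi> l))" for \<xi>
  proof -
    define G where "G i j k l = (cnj (\<alpha> i k) * \<alpha> j l) * cinner (p (X i j (p (\<xi> l)))) (\<xi> k)" for i j k l
    have "qf p m ?E \<xi> = (\<Sum>k<m. \<Sum>l<m. \<Sum>i<n. \<Sum>j<n. G i j k l)"
      unfolding qf_def G_def
      by (intro sum.cong refl)
        (simp add: conj_eval BH_sum[OF p_BH] BH_scale[OF p_BH] cinner_sum_left)
    moreover have "qf p n X (\<lambda>j. \<Sum>l<m. scaleC (\<alpha> j l) (\<xi> l)) = (\<Sum>i<n. \<Sum>j<n. \<Sum>k<m. \<Sum>l<m. G i j k l)"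
      unfolding qf_def G_def
      by (intro sum.cong refl)
        (simp add: XB BH_sum[OF p_BH] BH_scale[OF p_BH] BH_sum BH_scale cinner_sum_left cinner_sum_right
          sum_distrib_left algebra_simps)
    ultimately show ?thesis using swap4 by metis
  qed
  show ?thesis unfolding Cp_iff using m h XX(3) q by simp
qed

end

lemma half_diff: "scaleC (1/2) (a + b) - a = scaleC (1/2) (b - (a::'h::complex_hilbert))"
proof -
  have "a = scaleC (1/2 + 1/2) a" by simp
  also have "\<dots> = scaleC (1/2) a + scaleC (1/2) a" by (simp only: scaleC_add_left)
  finally have a: "a = scaleC (1/2) a + scaleC (1/2) a" .
  have "scaleC (1/2) (a + b) - a = scaleC (1/2) a + scaleC (1/2) b - (scaleC (1/2) a + scaleC (1/2) a)"
    by (subst a) (simp add: scaleC_add_right)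
  also have "\<dots> = scaleC (1/2) (b - a)" by (simp add: scaleC_diff_right)
  finally show ?thesis .
qed

context PS begin

lemma vsum_q: "vsum (qadd J) (coset J op_zero) (\<lambda>i. coset J (g i)) n = coset J (vsum op_add op_zero g n)"
  by (induct n) (simp_all add: qadd_coset)

lemma conj_q: "conj_mat (qadd J) (qscale J) (coset J op_zero) n m \<alpha> (\<lambda>i j. coset J (X i j))
   = (\<lambda>k l. coset J (conj_mat op_add op_scale op_zero n m \<alpha> X k l))"
  by (intro ext) (simp add: conj_mat_def qscale_coset vsum_q)

lemma qrep_quot: assumes "A \<in> quot V J" shows "qrep A \<in> V" "coset J (qrep A) = A"
proof -
  obtain a where a: "a \<in> V" "A = coset J a" using assms by (auto simp: quot_def)
  have d: "(\<lambda>\<xi>. qrep A \<xi> - a \<xi>) \<in> V" using qrep_diff[of a] a J_mem by blast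
  have "qrep A = op_add a (\<lambda>\<xi>. qrep A \<xi> - a \<xi>)" by (rule ext) (simp add: op_add_def)
  then show "qrep A \<in> V" using V_add[OF a(1) d] by simp
  show "coset J (qrep A) = A" using a coset_qrep by simp
qed

lemma pmo: "proper_matrix_ordering (quot V J) (qadd J) (qscale J) (coset J op_zero) (qstar J) (Ctilde V p)"
  unfolding proper_matrix_ordering_def
proof (intro conjI allI impI ballI)
  fix n :: nat assume n: "1 \<le> n"
  show "Ctilde V p n \<subseteq> {X \<in> matc (quot V J) (coset J op_zero) n. herm (qstar J) n X}"
  proof
    fix Xt assume "Xt \<in> Ctilde V p n"
    then obtain X where X: "X \<in> Cp V p n" and Xt: "Xt = (\<lambda>i j. coset J (X i j))" by (auto simp: Ctilde_def)
    have XX: "X \<in> matc V op_zero n" "herm adj n X" using X by (auto simp: Cp_iff)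
    have "Xt \<in> matc (quot V J) (coset J op_zero) n" using XX(1) by (auto simp: Xt matc_def coset_in_quot)
    moreover have "herm (qstar J) n Xt" using XX by (auto simp: Xt herm_def matc_def qstar_coset)
    ultimately show "Xt \<in> {X \<in> matc (quot V J) (coset J op_zero) n. herm (qstar J) n X}" by simp
  qed
next
  fix n :: nat and Xt Yt assume "Xt \<in> Ctilde V p n" "Yt \<in> Ctilde V p n"
  then obtain X Y where X: "X \<in> Cp V p n" and Xt: "Xt = (\<lambda>i j. coset J (X i j))"
    and Y: "Y \<in> Cp V p n" and Yt: "Yt = (\<lambda>i j. coset J (Y i j))" by (auto simp: Ctilde_def)
  have "(\<lambda>i j. qadd J (Xt i j) (Yt i j)) = (\<lambda>i j. coset J (op_add (X i j) (Y i j)))"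
    by (simp add: Xt Yt qadd_coset)
  then show "(\<lambda>i j. qadd J (Xt i j) (Yt i j)) \<in> Ctilde V p n"
    using Cp_add[OF X Y] unfolding Ctilde_def by auto
next
  fix n :: nat and Xt and r :: real assume "Xt \<in> Ctilde V p n" "0 \<le> r"
  then obtain X where X: "X \<in> Cp V p n" and Xt: "Xt = (\<lambda>i j. coset J (X i j))" and r: "r \<ge> 0"
    by (auto simp: Ctilde_def)
  have "(\<lambda>i j. qscale J (complex_of_real r) (Xt i j)) = (\<lambda>i j. coset J (op_scale (complex_of_real r) (X i j)))"
    by (simp add: Xt qscale_coset)
  then show "(\<lambda>i j. qscale J (complex_of_real r) (Xt i j)) \<in> Ctilde V p n"
    using Cp_scale[OF X r] unfolding Ctilde_def by auto
next
  fix n m :: nat and \<alpha> Xt assume "Xt \<in> Ctilde V p n"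
  then obtain X where X: "X \<in> Cp V p n" and Xt: "Xt = (\<lambda>i j. coset J (X i j))" by (auto simp: Ctilde_def)
  show "conj_mat (qadd J) (qscale J) (coset J op_zero) n m \<alpha> Xt \<in> Ctilde V p m"
    unfolding Xt conj_q using Cp_conj[OF X] unfolding Ctilde_def by auto
next
  fix n :: nat and Xt
  assume Xt_in: "Xt \<in> Ctilde V p n" and neg: "(\<lambda>i j. qscale J (-1) (Xt i j)) \<in> Ctilde V p n"
  obtain X where X: "X \<in> Cp V p n" and Xt: "Xt = (\<lambda>i j. coset J (X i j))" using Xt_in by (auto simp: Ctilde_def)
  obtain Y where Y: "Y \<in> Cp V p n" and Yt: "(\<lambda>i j. coset J (Y i j)) = (\<lambda>i j. qscale J (-1) (Xt i j))"
    using neg by (auto simp: Ctilde_def)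
  have XX: "X \<in> matc V op_zero n" "\<And>\<xi>. Im (qf p n X \<xi>) = 0 \<and> Re (qf p n X \<xi>) \<ge> 0"
    using X by (auto simp: Cp_iff)
  have YY: "Y \<in> matc V op_zero n" "\<And>\<xi>. Im (qf p n Y \<xi>) = 0 \<and> Re (qf p n Y \<xi>) \<ge> 0"
    using Y by (auto simp: Cp_iff)
  have XV: "\<And>i j. i < n \<Longrightarrow> j < n \<Longrightarrow> X i j \<in> V" using XX(1) by (simp add: matc_def)
  have pe: "p (X i j (p v)) = p (op_scale (-1) (Y i j) (p v))" if ij: "i < n" "j < n" for i j v
  proof -
    have "coset J (Y i j) = coset J (op_scale (-1) (X i j))"
      using fun_cong[OF fun_cong[OF Yt, of i], of j] by (simp add: Xt qscale_coset)
    then have "(\<lambda>\<xi>. Y i j \<xi> - op_scale (-1) (X i j) \<xi>) \<in> J" by (simp add: coset_eq)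
    then have "p (Y i j (p v) - op_scale (-1) (X i j) (p v)) = 0" by (simp add: J_mem)
    then have "p (Y i j (p v)) + p (X i j (p v)) = 0"
      by (simp add: BH_diff[OF p_BH] op_scale_def BH_minus[OF p_BH] BH_add[OF p_BH])
    then show ?thesis by (simp add: op_scale_def BH_minus[OF p_BH] eq_neg_iff_add_eq_0 add.commute)
  qed
  have q0: "qf p n X \<xi> = 0" for \<xi>
  proof -
    have "qf p n X \<xi> = qf p n (\<lambda>i j. op_scale (-1) (Y i j)) \<xi>" by (rule qf_cong) (rule pe)
    also have "\<dots> = - qf p n Y \<xi>" by (simp add: qf_scale)
    finally have e: "qf p n X \<xi> = - qf p n Y \<xi>" .
    show ?thesis using XX(2)[of \<xi>] YY(2)[of \<xi>] e by (simp add: complex_eq_iff)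
  qed
  have Xz: "p (X i j (p a)) = 0" if ij: "i < n" "j < n" for i j a
  proof (rule polar[of n "\<lambda>i j v. p (X i j (p v))", OF _ _ _ ij])
    show "p (X i j (p (x + y))) = p (X i j (p x)) + p (X i j (p y))" if "i < n" "j < n" for i j x y
      using that XV V_BH by (simp add: BH_add p_BH)
    show "p (X i j (p (scaleC c x))) = scaleC c (p (X i j (p x)))" if "i < n" "j < n" for i j c x
      using that XV V_BH by (simp add: BH_scale p_BH)
    show "(\<Sum>i<n. \<Sum>j<n. cinner (p (X i j (p (\<xi> j)))) (\<xi> i)) = 0" for \<xi>
      using q0[of \<xi>] by (simp add: qf_def)
  qed
  show "Xt = (\<lambda>i j. coset J op_zero)"
  proof (intro ext)
    fix i j
    show "Xt i j = coset J op_zero"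
    proof (cases "i < n \<and> j < n")
      case True
      have "(\<lambda>\<xi>. X i j \<xi> - op_zero \<xi>) = X i j" by (rule ext) (simp add: op_zero_def)
      moreover have "X i j \<in> J" using Xz True XV by (simp add: J_mem)
      ultimately show ?thesis by (simp add: Xt coset_eq)
    next
      case False
      then show ?thesis using XX(1) by (simp add: Xt matc_def)
    qed
  qed
qed

end

context PS begin

lemma herm_lift:
  assumes Xm: "Xt \<in> matc (quot V J) (coset J op_zero) n" and Xh: "herm (qstar J) n Xt"
  shows "\<exists>X'. X' \<in> matc V op_zero n \<and> (\<forall>i<n. \<forall>j<n. adj (X' i j) = X' j i)
            \<and> Xt = (\<lambda>i j. coset J (X' i j))"
proof -
  define x where "x i j = qrep (Xt i j)" for i j
  have xq: "x i j \<in> V" "coset J (x i j) = Xt i j" if "i < n" "j < n" for i j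
    using Xm that qrep_quot unfolding x_def matc_def by auto
  have xh: "coset J (adj (x i j)) = coset J (x j i)" if "i < n" "j < n" for i j
  proof -
    have "qstar J (Xt i j) = Xt j i" using Xh that by (simp add: herm_def)
    then show ?thesis using xq[OF that] xq[OF that(2,1)] qstar_coset by metis
  qed
  define X' where "X' i j = (if i < n \<and> j < n then op_scale (1/2) (op_add (x i j) (adj (x j i))) else op_zero)" for i j
  have m: "X' \<in> matc V op_zero n"
    unfolding matc_def
  proof (intro CollectI conjI allI impI)
    fix i j assume ij: "i < n" "j < n"
    then have "X' i j = op_scale (1/2) (op_add (x i j) (adj (x j i)))" by (simp add: X'_def)
    then show "X' i j \<in> V" using xq[OF ij] xq[OF ij(2,1)] by (simp add: V_scale V_add V_adj)
  next
    fix i j assume ij: "\<not> (i < n \<and> j < n)"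
    show "X' i j = op_zero" by (simp only: X'_def if_not_P[OF ij] if_False)
  qed
  have h: "adj (X' i j) = X' j i" if ij: "i < n" "j < n" for i j
  proof -
    have "adj (X' i j) = op_scale (1/2) (op_add (adj (x i j)) (x j i))"
      using ij xq[OF ij] xq[OF ij(2,1)]
      by (simp add: X'_def adj_op_scale adj_op_add V_BH V_add V_adj adj_adj)
    also have "\<dots> = X' j i" using ij by (simp add: X'_def op_add_comm)
    finally show ?thesis .
  qed
  have c: "Xt = (\<lambda>i j. coset J (X' i j))"
  proof (intro ext)
    fix i j
    show "Xt i j = coset J (X' i j)"
    proof (cases "i < n \<and> j < n")
      case True
      then have ij: "i < n" "j < n" by auto
      have d: "(\<lambda>\<xi>. adj (x j i) \<xi> - x i j \<xi>) \<in> J" using xh[OF ij(2,1)] by (simp add: coset_eq)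
      have "(\<lambda>\<xi>. X' i j \<xi> - x i j \<xi>) = op_scale (1/2) (\<lambda>\<xi>. adj (x j i) \<xi> - x i j \<xi>)"
        using ij by (intro ext) (simp add: X'_def op_scale_def op_add_def half_diff)
      moreover have "op_scale (1/2) (\<lambda>\<xi>. adj (x j i) \<xi> - x i j \<xi>) \<in> J"
        using d J_eq KK_scale by simp
      ultimately have "coset J (X' i j) = coset J (x i j)" by (simp add: coset_eq)
      then show ?thesis using xq[OF ij] by simp
    next
      case False
      then have "X' i j = op_zero" by (simp only: X'_def if_not_P[OF False] if_False)
      moreover have "Xt i j = coset J op_zero" using Xm False by (simp add: matc_def)
      ultimately show ?thesis by simp
    qed
  qed
  show ?thesis using m h c by blast
qed

definition Yr :: "nat \<Rightarrow> real \<Rightarrow> (nat \<Rightarrow> nat \<Rightarrow> 'h \<Rightarrow> 'h) \<Rightarrow> (nat \<Rightarrow> nat \<Rightarrow> 'h \<Rightarrow> 'h)" where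
  "Yr n r X' = (\<lambda>i j. if i < n \<and> j < n then
      op_add (op_scale (complex_of_real r) (if i = j then p else op_zero)) (X' i j) else op_zero)"

lemma Yr_coset: assumes m: "X' \<in> matc V op_zero n"
  shows "(\<lambda>i j. qadd J (qscale J (complex_of_real r) (unit_mat (coset J op_zero) (coset J p) n i j))
              (coset J (X' i j))) = (\<lambda>i j. coset J (Yr n r X' i j))"
proof (intro ext)
  fix i j
  show "qadd J (qscale J (complex_of_real r) (unit_mat (coset J op_zero) (coset J p) n i j)) (coset J (X' i j))
        = coset J (Yr n r X' i j)"
  proof (cases "i < n \<and> j < n")
    case True
    have "unit_mat (coset J op_zero) (coset J p) n i j = coset J (if i = j then p else op_zero)"
      using True by (simp add: unit_mat_def)
    then show ?thesis using True by (simp add: Yr_def qscale_coset qadd_coset)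
  next
    case False
    then have "unit_mat (coset J op_zero) (coset J p) n i j = coset J op_zero" by (auto simp: unit_mat_def)
    moreover have "X' i j = op_zero" using False m by (simp add: matc_def)
    moreover have "Yr n r X' i j = op_zero" by (simp only: Yr_def if_not_P[OF False] if_False)
    ultimately show ?thesis
      by (simp add: qscale_coset qadd_coset op_scale_zero op_add_zero_zero)
  qed
qed

lemma Yr_matc: "X' \<in> matc V op_zero n \<Longrightarrow> Yr n r X' \<in> matc V op_zero n"
  unfolding matc_def Yr_def by (auto intro!: V_add V_scale simp: pV V_zero)

lemma Yr_herm: assumes m: "X' \<in> matc V op_zero n" and h: "\<And>i j. i < n \<Longrightarrow> j < n \<Longrightarrow> adj (X' i j) = X' j i"
  shows "herm adj n (Yr n r X')"
  unfolding herm_def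
proof (intro allI impI)
  fix i j assume ij: "i < n" "j < n"
  have XV: "X' i j \<in> V" using m ij by (simp add: matc_def)
  have PV: "(if i = j then p else op_zero) \<in> V" by (simp add: pV V_zero)
  have "adj (if i = j then p else op_zero) = (if j = i then p else op_zero)" by (simp add: p_adj adj_op_zero)
  then show "adj (Yr n r X' i j) = Yr n r X' j i"
    using ij XV PV h[OF ij] by (simp add: Yr_def adj_op_add adj_op_scale V_scale V_BH)
qed

lemma Yr_qf: "qf p n (Yr n r X') \<xi> = complex_of_real r * complex_of_real (\<Sum>i<n. NN (p (\<xi> i))) + qf p n X' \<xi>"
proof -
  have "qf p n (Yr n r X') \<xi>
     = qf p n (\<lambda>i j. op_add (op_scale (complex_of_real r) (if i = j then p else op_zero)) (X' i j)) \<xi>"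
    by (rule qf_cong) (simp add: Yr_def)
  also have "\<dots> = complex_of_real r * qf p n (\<lambda>i j. if i = j then p else op_zero) \<xi> + qf p n X' \<xi>"
    by (simp add: qf_add qf_scale)
  finally show ?thesis by (simp add: qf_P)
qed

lemma aou: "archimedean_matrix_order_unit (quot V J) (qadd J) (qscale J) (coset J op_zero) (qstar J) (Ctilde V p) (coset J p)"
  unfolding archimedean_matrix_order_unit_def
proof (intro conjI allI impI ballI)
  show "coset J p \<in> quot V J" by (rule coset_in_quot[OF pV])
  show "qstar J (coset J p) = coset J p" by (simp add: qstar_coset pV p_adj)
next
  fix n :: nat and Xt assume n: "1 \<le> n" and Xm: "Xt \<in> matc (quot V J) (coset J op_zero) n"
    and Xh: "herm (qstar J) n Xt"
  obtain X' where m: "X' \<in> matc V op_zero n" and h: "\<forall>i<n. \<forall>j<n. adj (X' i j) = X' j i"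
    and c: "Xt = (\<lambda>i j. coset J (X' i j))" using herm_lift[OF Xm Xh] by blast
  have XV: "\<And>i j. i < n \<Longrightarrow> j < n \<Longrightarrow> X' i j \<in> V" using m by (simp add: matc_def)
  have hh: "herm adj n X'" using h by (simp add: herm_def)
  obtain C where C: "C \<ge> 0" "\<And>\<xi>. cmod (qf p n X' \<xi>) \<le> C * (\<Sum>i<n. NN (p (\<xi> i)))"
    using qf_bound[where n=n and X=X', OF XV] by blast
  define r where "r = C + 1"
  have r: "r > 0" using C by (simp add: r_def)
  have "Yr n r X' \<in> Cp V p n"
    unfolding Cp_iff
  proof (intro conjI allI)
    show "Yr n r X' \<in> matc V op_zero n" by (rule Yr_matc[OF m])
    show "herm adj n (Yr n r X')" using Yr_herm[OF m] h by blast
    fix \<xi>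
    define S where "S = (\<Sum>i<n. NN (p (\<xi> i)))"
    have S0: "S \<ge> 0" unfolding S_def by (rule sum_nonneg) (rule NN_ge0)
    have im: "Im (qf p n X' \<xi>) = 0" by (rule qf_herm_real[where n=n and X=X', OF XV hh])
    have "- Re (qf p n X' \<xi>) \<le> cmod (qf p n X' \<xi>)" using abs_Re_le_cmod[of "qf p n X' \<xi>"] by linarith
    also have "\<dots> \<le> C * S" using C(2) by (simp add: S_def)
    finally have re: "0 \<le> r * S + Re (qf p n X' \<xi>)" using S0 by (simp add: r_def algebra_simps)
    show "Im (qf p n (Yr n r X') \<xi>) = 0" using im by (simp add: Yr_qf)
    show "Re (qf p n (Yr n r X') \<xi>) \<ge> 0" using re by (simp add: Yr_qf S_def)
  qed
  then have "(\<lambda>i j. coset J (Yr n r X' i j)) \<in> Ctilde V p n" by (auto simp: Ctilde_def)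
  then show "\<exists>r>0. (\<lambda>i j. qadd J (qscale J (complex_of_real r) (unit_mat (coset J op_zero) (coset J p) n i j)) (Xt i j)) \<in> Ctilde V p n"
    using r unfolding c Yr_coset[OF m] by blast
next
  fix n :: nat and Xt assume n: "1 \<le> n" and Xm: "Xt \<in> matc (quot V J) (coset J op_zero) n"
    and Xh: "herm (qstar J) n Xt"
    and all: "\<forall>r>0. (\<lambda>i j. qadd J (qscale J (complex_of_real r) (unit_mat (coset J op_zero) (coset J p) n i j)) (Xt i j)) \<in> Ctilde V p n"
  obtain X' where m: "X' \<in> matc V op_zero n" and h: "\<forall>i<n. \<forall>j<n. adj (X' i j) = X' j i"
    and c: "Xt = (\<lambda>i j. coset J (X' i j))" using herm_lift[OF Xm Xh] by blast
  have XV: "\<And>i j. i < n \<Longrightarrow> j < n \<Longrightarrow> X' i j \<in> V" using m by (simp add: matc_def)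
  have hh: "herm adj n X'" using h by (simp add: herm_def)
  have pos: "0 \<le> r * (\<Sum>i<n. NN (p (\<xi> i))) + Re (qf p n X' \<xi>)" if r: "r > 0" for r \<xi>
  proof -
    have "(\<lambda>i j. coset J (Yr n r X' i j)) \<in> Ctilde V p n"
      using all r unfolding c Yr_coset[OF m] by blast
    then obtain Z where Z: "Z \<in> Cp V p n" and Zc: "(\<lambda>i j. coset J (Z i j)) = (\<lambda>i j. coset J (Yr n r X' i j))"
      by (auto simp: Ctilde_def)
    have YV: "Yr n r X' \<in> matc V op_zero n" by (rule Yr_matc[OF m])
    have "qf p n Z \<xi> = qf p n (Yr n r X') \<xi>"
    proof (rule qf_cong)
      fix i j v assume ij: "i < n" "j < n"
      have "coset J (Z i j) = coset J (Yr n r X' i j)" using fun_cong[OF fun_cong[OF Zc, of i], of j] by simp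
      then have "(\<lambda>\<xi>. Z i j \<xi> - Yr n r X' i j \<xi>) \<in> J" by (simp add: coset_eq)
      then have "p (Z i j (p v) - Yr n r X' i j (p v)) = 0" by (simp add: J_mem)
      then show "p (Z i j (p v)) = p (Yr n r X' i j (p v))" by (simp add: BH_diff[OF p_BH])
    qed
    moreover have "Re (qf p n Z \<xi>) \<ge> 0" using Z by (simp add: Cp_iff)
    ultimately show ?thesis by (simp add: Yr_qf)
  qed
  have "X' \<in> Cp V p n"
    unfolding Cp_iff
  proof (intro conjI allI)
    show "X' \<in> matc V op_zero n" by (rule m)
    show "herm adj n X'" by (rule hh)
    fix \<xi>
    show "Im (qf p n X' \<xi>) = 0" by (rule qf_herm_real[where n=n and X=X', OF XV hh])
    define S where "S = (\<Sum>i<n. NN (p (\<xi> i)))"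
    have S0: "S \<ge> 0" unfolding S_def by (rule sum_nonneg) (rule NN_ge0)
    show "Re (qf p n X' \<xi>) \<ge> 0"
    proof (rule ccontr)
      assume "\<not> Re (qf p n X' \<xi>) \<ge> 0"
      then have neg: "Re (qf p n X' \<xi>) < 0" by simp
      define r where "r = - Re (qf p n X' \<xi>) / (2 * (S + 1))"
      have r0: "r > 0" unfolding r_def using neg S0 by (intro divide_pos_pos) auto
      have "r * S \<le> - Re (qf p n X' \<xi>) / 2"
      proof -
        have "r * S = - Re (qf p n X' \<xi>) / 2 * (S / (S + 1))" by (simp add: r_def field_simps)
        also have "\<dots> \<le> - Re (qf p n X' \<xi>) / 2 * 1"
          using neg S0 by (intro mult_left_mono) auto
        finally show ?thesis by simp
      qed
      moreover have "0 \<le> r * S + Re (qf p n X' \<xi>)" using pos[OF r0, of \<xi>] by (simp add: S_def)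
      ultimately show False using neg by linarith
    qed
  qed
  then show "Xt \<in> Ctilde V p n" unfolding c Ctilde_def by blast
qed

theorem main: "operator_system (quot V J) (qadd J) (qscale J) (coset J op_zero) (qstar J) (Ctilde V p) (coset J p)"
  unfolding operator_system_def using qsvs pmo aou by blast

end

theorem theorem3p6:
  fixes V :: "('h::complex_hilbert \<Rightarrow> 'h) set" and p :: "'h \<Rightarrow> 'h"
  assumes "concrete_opsys V" and "p \<in> V" and "is_projection p"
  shows "operator_system (quot V (Jp V p)) (qadd (Jp V p)) (qscale (Jp V p))
           (coset (Jp V p) op_zero) (qstar (Jp V p)) (Ctilde V p) (coset (Jp V p) p)"
proof -
  interpret PS V p using assms by unfold_locales
  show ?thesis by (rule main)
qed

end
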